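(* Suppose $EX>0$ and $(X,W)$ satisfies Cramér's condition. Then $T$ is arithmetic on $\mathbb{Z}$ and $(\tilde X,\tilde W)$ is strongly nonlattice with $T$.
   Context: Let $(X,W)$ be a random vector with $X\in\mathbb{R}$, $W\in\mathbb{R}^m$, and $\{(X_n,W_n)\}_{n\ge0}$ the random walk with $(X_0,W_0)=(0,0)$ and i.i.d. increments distributed as $(X,W)$. Cramér's condition: $\limsup_{|(\xi_1,\xi_2)|\to\infty}|Ee^{i(\xi_1X+\xi_2\cdot W)}|<1$. Let $T=\inf\{n:X_n>0\}$, $\tilde X=X_T$, $\tilde W=W_T$. $T$ is arithmetic on $\mathbb{Z}$ if $P(T\in\mathbb{Z})=1$ but $P(T\in B)<1$ for every proper subgroup $B$ of $\mathbb{Z}$. $(\tilde X,\tilde W)$ is strongly nonlattice with $T$ if $\liminf_{\xi_1^2+|\xi_2|^2\to\infty}\inf_{-\pi<\xi_3<\pi}|1-Ee^{i\xi_1\tilde X+i\xi_2\cdot\tilde W+i\xi_3T}|>0$. *)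

theory Defs
  imports "HOL-Probability.Probability"
begin

definition walk :: "(nat \<Rightarrow> 'a \<Rightarrow> real \<times> (real ^ 'm)) \<Rightarrow> nat \<Rightarrow> 'a \<Rightarrow> real \<times> (real ^ 'm)" where
  "walk Z n \<omega> = (\<Sum>k<n. Z k \<omega>)"

definition ladder_finite :: "(nat \<Rightarrow> 'a \<Rightarrow> real \<times> (real ^ 'm)) \<Rightarrow> 'a \<Rightarrow> bool" where
  "ladder_finite Z \<omega> \<longleftrightarrow> (\<exists>n. fst (walk Z n \<omega>) > 0)"

text \<open>T = inf{n : X_n > 0} (set to 0 on the event where it is infinite).\<close>
definition ladder_time :: "(nat \<Rightarrow> 'a \<Rightarrow> real \<times> (real ^ 'm)) \<Rightarrow> 'a \<Rightarrow> nat" where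
  "ladder_time Z \<omega> = (if ladder_finite Z \<omega> then (LEAST n. fst (walk Z n \<omega>) > 0) else 0)"

definition ladder_height :: "(nat \<Rightarrow> 'a \<Rightarrow> real \<times> (real ^ 'm)) \<Rightarrow> 'a \<Rightarrow> real \<times> (real ^ 'm)" where
  "ladder_height Z \<omega> = walk Z (ladder_time Z \<omega>) \<omega>"

definition int_subgroup :: "int set \<Rightarrow> bool" where
  "int_subgroup B \<longleftrightarrow> 0 \<in> B \<and> (\<forall>a\<in>B. \<forall>b\<in>B. a + b \<in> B) \<and> (\<forall>a\<in>B. - a \<in> B)"

definition arithmetic_on_Z :: "'a measure \<Rightarrow> ('a \<Rightarrow> bool) \<Rightarrow> ('a \<Rightarrow> nat) \<Rightarrow> bool" where
  "arithmetic_on_Z M fin T \<longleftrightarrow>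
     measure M {\<omega> \<in> space M. fin \<omega>} = 1 \<and>
     (\<forall>B. int_subgroup B \<and> B \<noteq> UNIV \<longrightarrow> measure M {\<omega> \<in> space M. fin \<omega> \<and> int (T \<omega>) \<in> B} < 1)"

definition cramer_condition :: "'a measure \<Rightarrow> ('a \<Rightarrow> real \<times> (real ^ 'm)) \<Rightarrow> bool" where
  "cramer_condition M Z0 \<longleftrightarrow>
     Limsup at_infinity (\<lambda>\<xi> :: real \<times> (real ^ 'm).
        ereal (cmod (LINT \<omega>|M. cis (fst \<xi> * fst (Z0 \<omega>) + snd \<xi> \<bullet> snd (Z0 \<omega>))))) < 1"

definition strongly_nonlattice_with :: "'a measure \<Rightarrow> ('a \<Rightarrow> real \<times> (real ^ 'm)) \<Rightarrow> ('a \<Rightarrow> nat) \<Rightarrow> bool" where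
  "strongly_nonlattice_with M H T \<longleftrightarrow>
     Liminf at_infinity (\<lambda>\<xi> :: real \<times> (real ^ 'm).
        INF t \<in> {-pi<..<pi}. ereal (cmod (1 - (LINT \<omega>|M.
           cis (fst \<xi> * fst (H \<omega>) + snd \<xi> \<bullet> snd (H \<omega>) + t * real (T \<omega>)))))) > 0"

end

theory Submission
  imports Defs
begin
definition th :: "real \<times> (real ^ 'm) \<Rightarrow> real \<times> (real ^ 'm) \<Rightarrow> real" where
  "th \<xi> z = fst \<xi> * fst z + snd \<xi> \<bullet> snd z"

lemma th_add: "th \<xi> (a + b) = th \<xi> a + th \<xi> b"
  by (simp add: th_def algebra_simps inner_add_right)

lemma th_zero[simp]: "th \<xi> 0 = 0"
  by (simp add: th_def)

lemma th_diff: "th \<xi> (a - b) = th \<xi> a - th \<xi> b"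
  by (simp add: th_def algebra_simps inner_diff_right)

definition ps :: "(nat \<Rightarrow> real \<times> (real ^ 'm)) \<Rightarrow> nat \<Rightarrow> real \<times> (real ^ 'm)" where
  "ps p i = (\<Sum>k<i. p k)"

lemma ps_0[simp]: "ps p 0 = 0" by (simp add: ps_def)
lemma ps_Suc: "ps p (Suc i) = ps p i + p i" by (simp add: ps_def)

lemma ps_local: "(\<And>k. k < i \<Longrightarrow> p k = q k) \<Longrightarrow> ps p i = ps q i"
  by (simp add: ps_def)

lemma ps_shift: "ps (\<lambda>k. p (j + k)) m = ps p (j + m) - ps p j"
  by (induction m) (simp_all add: ps_Suc)

lemma ps_rev: "m \<le> j \<Longrightarrow> ps (\<lambda>k. p (j - 1 - k)) m = ps p j - ps p (j - m)"
proof (induction m)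
  case 0 then show ?case by simp
next
  case (Suc m)
  then have "j - m = Suc (j - Suc m)" by simp
  then have "ps p (j - m) = ps p (j - Suc m) + p (j - Suc m)" by (simp add: ps_Suc)
  moreover have "j - 1 - m = j - Suc m" by simp
  ultimately show ?case using Suc by (simp add: ps_Suc)
qed

lemma cis_th_ps: "cis (th \<xi> (ps p n)) = (\<Prod>k<n. cis (th \<xi> (p k)))"
  by (induction n) (simp_all add: ps_Suc th_add cis_mult[symmetric])

definition Fa :: "real \<times> (real ^ 'm) \<Rightarrow> nat \<Rightarrow> (nat \<Rightarrow> real \<times> (real ^ 'm)) \<Rightarrow> complex" where
  "Fa \<xi> n p = (if \<forall>i\<in>{1..n}. fst (ps p i) \<le> 0 then cis (th \<xi> (ps p n)) else 0)"
definition Fb :: "real \<times> (real ^ 'm) \<Rightarrow> nat \<Rightarrow> (nat \<Rightarrow> real \<times> (real ^ 'm)) \<Rightarrow> complex" where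
  "Fb \<xi> n p = (if \<forall>i\<in>{1..n}. fst (ps p i) > 0 then cis (th \<xi> (ps p n)) else 0)"
definition Cc :: "nat \<Rightarrow> (nat \<Rightarrow> real \<times> (real ^ 'm)) \<Rightarrow> bool" where
  "Cc n p \<longleftrightarrow> (\<forall>i\<in>{1..<n}. fst (ps p i) \<le> 0) \<and> fst (ps p n) > 0"
definition Cd :: "nat \<Rightarrow> (nat \<Rightarrow> real \<times> (real ^ 'm)) \<Rightarrow> bool" where
  "Cd n p \<longleftrightarrow> 0 < n \<and> (\<forall>i\<in>{1..<n}. fst (ps p i) > 0) \<and> fst (ps p n) \<le> 0"
definition Fc :: "real \<times> (real ^ 'm) \<Rightarrow> nat \<Rightarrow> (nat \<Rightarrow> real \<times> (real ^ 'm)) \<Rightarrow> complex" where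
  "Fc \<xi> n p = (if Cc n p then cis (th \<xi> (ps p n)) else 0)"
definition Fd :: "real \<times> (real ^ 'm) \<Rightarrow> nat \<Rightarrow> (nat \<Rightarrow> real \<times> (real ^ 'm)) \<Rightarrow> complex" where
  "Fd \<xi> n p = (if Cd n p then cis (th \<xi> (ps p n)) else 0)"

lemma Fa_0[simp]: "Fa \<xi> 0 p = 1" by (simp add: Fa_def)
lemma Fb_0[simp]: "Fb \<xi> 0 p = 1" by (simp add: Fb_def)
lemma Fc_0[simp]: "Fc \<xi> 0 p = 0" by (simp add: Fc_def Cc_def)
lemma Fd_0[simp]: "Fd \<xi> 0 p = 0" by (simp add: Fd_def Cd_def)

lemma Fa_Suc: "Fa \<xi> (Suc n) p + Fc \<xi> (Suc n) p = Fa \<xi> n p * cis (th \<xi> (p n))"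
proof -
  have e: "(\<forall>i\<in>{1..Suc n}. P i) \<longleftrightarrow> (\<forall>i\<in>{1..n}. P i) \<and> P (Suc n)" for P
    by (auto simp: atLeastAtMostSuc_conv)
  have e2: "{1..<Suc n} = {1..n}" by auto
  show ?thesis
    unfolding Fa_def Fc_def Cc_def e e2
    by (auto simp: ps_Suc th_add cis_mult)
qed

lemma Fb_Suc: "Fb \<xi> (Suc n) p + Fd \<xi> (Suc n) p = Fb \<xi> n p * cis (th \<xi> (p n))"
proof -
  have e: "(\<forall>i\<in>{1..Suc n}. P i) \<longleftrightarrow> (\<forall>i\<in>{1..n}. P i) \<and> P (Suc n)" for P
    by (auto simp: atLeastAtMostSuc_conv)
  have e2: "{1..<Suc n} = {1..n}" by auto
  show ?thesis
    unfolding Fb_def Fd_def Cd_def e e2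
    by (auto simp: ps_Suc th_add cis_mult)
qed

lemma Cc_unique: "Cc n p \<Longrightarrow> Cc m p \<Longrightarrow> n = m"
proof (rule ccontr)
  assume a: "Cc n p" "Cc m p" "n \<noteq> m"
  { fix n m assume a: "Cc n p" "Cc m p" "n < m"
    have "n \<noteq> 0" using a(1) by (cases n) (auto simp: Cc_def)
    then have "n \<in> {1..<m}" using a by auto
    then have "fst (ps p n) \<le> 0" using a(2) by (auto simp: Cc_def)
    then have False using a(1) by (auto simp: Cc_def) }
  then show False using a by (metis linorder_neqE_nat)
qed

lemma Cd_unique: "Cd n p \<Longrightarrow> Cd m p \<Longrightarrow> n = m"
proof (rule ccontr)
  assume a: "Cd n p" "Cd m p" "n \<noteq> m"
  { fix n m assume a: "Cd n p" "Cd m p" "n < m"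
    have "n \<noteq> 0" using a(1) by (auto simp: Cd_def)
    then have "n \<in> {1..<m}" using a by auto
    then have "fst (ps p n) > 0" using a(2) by (auto simp: Cd_def)
    then have False using a(1) by (auto simp: Cd_def) }
  then show False using a by (metis linorder_neqE_nat)
qed

lemma sum_unique_le1:
  fixes f :: "nat \<Rightarrow> real"
  assumes "\<And>n m. P n \<Longrightarrow> P m \<Longrightarrow> n = m" "\<And>n. 0 \<le> f n" "\<And>n. f n \<le> 1" "\<And>n. \<not> P n \<Longrightarrow> f n = 0"
  shows "(\<Sum>n<N. f n) \<le> 1"
proof (cases "\<exists>n<N. P n")
  case True
  then obtain n0 where n0: "n0 < N" "P n0" by auto
  have "(\<Sum>n<N. f n) = (\<Sum>n<N. if n = n0 then f n0 else 0)"
    using assms n0 by (intro sum.cong) (auto, metis)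
  also have "\<dots> = f n0" using n0 by simp
  finally show ?thesis using assms by simp
next
  case False
  then have "(\<Sum>n<N. f n) = 0" using assms by (intro sum.neutral) auto
  then show ?thesis by simp
qed

lemma Fc_sum_le: "(\<Sum>n<N. cmod (Fc \<xi> n p)) \<le> 1"
  by (rule sum_unique_le1[of "\<lambda>n. Cc n p"]) (auto simp: Fc_def Cc_unique)

lemma Fd_sum_le: "(\<Sum>n<N. cmod (Fd \<xi> n p)) \<le> 1"
  by (rule sum_unique_le1[of "\<lambda>n. Cd n p"]) (auto simp: Fd_def Cd_unique)

lemma first_max_decomp:
  "cis (th \<xi> (ps p n)) = (\<Sum>j\<le>n. Fb \<xi> j (\<lambda>k. p (j - 1 - k)) * Fa \<xi> (n - j) (\<lambda>k. p (j + k)))"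
proof -
  let ?s = "\<lambda>i. fst (ps p i)"
  define cond where "cond j \<longleftrightarrow> (\<forall>i<j. ?s i < ?s j) \<and> (\<forall>i\<in>{j<..n}. ?s i \<le> ?s j)" for j
  have trm: "Fb \<xi> j (\<lambda>k. p (j - 1 - k)) * Fa \<xi> (n - j) (\<lambda>k. p (j + k))
      = (if cond j then cis (th \<xi> (ps p n)) else 0)" if j: "j \<le> n" for j
  proof -
    have c1: "(\<forall>m\<in>{1..j}. fst (ps (\<lambda>k. p (j - 1 - k)) m) > 0) \<longleftrightarrow> (\<forall>i<j. ?s i < ?s j)"
    proof
      assume h: "\<forall>m\<in>{1..j}. fst (ps (\<lambda>k. p (j - 1 - k)) m) > 0"
      show "\<forall>i<j. ?s i < ?s j"
      proof (intro allI impI)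
        fix i assume "i < j"
        then have "j - i \<in> {1..j}" "j - (j - i) = i" by auto
        then show "?s i < ?s j" using h ps_rev[of "j - i" j p] by force
      qed
    next
      assume h: "\<forall>i<j. ?s i < ?s j"
      show "\<forall>m\<in>{1..j}. fst (ps (\<lambda>k. p (j - 1 - k)) m) > 0"
      proof
        fix m assume m: "m \<in> {1..j}"
        then have "j - m < j" by auto
        then show "fst (ps (\<lambda>k. p (j - 1 - k)) m) > 0" using h m ps_rev[of m j p] by auto
      qed
    qed
    have c2: "(\<forall>m\<in>{1..n - j}. fst (ps (\<lambda>k. p (j + k)) m) \<le> 0) \<longleftrightarrow> (\<forall>i\<in>{j<..n}. ?s i \<le> ?s j)"
    proof
      assume h: "\<forall>m\<in>{1..n - j}. fst (ps (\<lambda>k. p (j + k)) m) \<le> 0"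
      show "\<forall>i\<in>{j<..n}. ?s i \<le> ?s j"
      proof
        fix i assume i: "i \<in> {j<..n}"
        then have "i - j \<in> {1..n-j}" "j + (i - j) = i" by auto
        then show "?s i \<le> ?s j" using h ps_shift[of p j "i - j"] by force
      qed
    next
      assume h: "\<forall>i\<in>{j<..n}. ?s i \<le> ?s j"
      show "\<forall>m\<in>{1..n - j}. fst (ps (\<lambda>k. p (j + k)) m) \<le> 0"
      proof
        fix m assume m: "m \<in> {1..n - j}"
        then have "j + m \<in> {j<..n}" by auto
        then show "fst (ps (\<lambda>k. p (j + k)) m) \<le> 0" using h ps_shift[of p j m] by auto
      qed
    qed
    have v: "cis (th \<xi> (ps (\<lambda>k. p (j - 1 - k)) j)) * cis (th \<xi> (ps (\<lambda>k. p (j + k)) (n - j)))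
        = cis (th \<xi> (ps p n))"
    proof -
      have r: "ps (\<lambda>k. p (j - 1 - k)) j = ps p j" using ps_rev[of j j p] by simp
      have s: "ps (\<lambda>k. p (j + k)) (n - j) = ps p n - ps p j" using ps_shift[of p j "n-j"] j by simp
      show ?thesis unfolding r s by (simp add: cis_mult th_diff)
    qed
    show ?thesis
      unfolding Fa_def Fb_def c1 c2 cond_def using v by auto
  qed
  have fin: "finite (?s ` {..n})" by simp
  obtain j0 where j0: "j0 \<le> n" "\<forall>i\<le>n. ?s i \<le> ?s j0" "\<forall>i<j0. ?s i < ?s j0"
  proof -
    define P where "P j \<longleftrightarrow> j \<le> n \<and> (\<forall>i\<le>n. ?s i \<le> ?s j)" for j
    have "\<exists>j. P j"
    proof -
      have "Max (?s ` {..n}) \<in> ?s ` {..n}" by (rule Max_in[OF fin]) auto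
      then obtain j where j: "j \<le> n" "?s j = Max (?s ` {..n})" by (metis (no_types, lifting) atMost_iff imageE)
      have "\<forall>i\<le>n. ?s i \<le> ?s j" unfolding j(2) using fin by (auto intro!: Max_ge)
      then show ?thesis using j(1) unfolding P_def by auto
    qed
    then have P0: "P (LEAST j. P j)" by (rule LeastI_ex)
    have "\<forall>i<(LEAST j. P j). ?s i < ?s (LEAST j. P j)"
    proof (intro allI impI)
      fix i assume i: "i < (LEAST j. P j)"
      then have "\<not> P i" using not_less_Least by blast
      moreover have "i \<le> n" using i P0 unfolding P_def by auto
      ultimately have "\<not> (\<forall>k\<le>n. ?s k \<le> ?s i)" unfolding P_def by auto
      then obtain k where "k \<le> n" "?s i < ?s k" by (auto simp: not_le)
      moreover have "?s k \<le> ?s (LEAST j. P j)" using P0 \<open>k \<le> n\<close> unfolding P_def by auto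
      ultimately show "?s i < ?s (LEAST j. P j)" by linarith
    qed
    then show thesis using that P0 unfolding P_def by blast
  qed
  have condj: "cond j \<longleftrightarrow> j = j0" if "j \<le> n" for j
  proof
    assume c: "cond j"
    show "j = j0"
    proof (rule ccontr)
      assume "j \<noteq> j0"
      then consider "j < j0" | "j0 < j" by linarith
      then show False
      proof cases
        case 1
        then have "?s j < ?s j0" using j0 by auto
        moreover have "?s j0 \<le> ?s j" using c 1 j0 unfolding cond_def by auto
        ultimately show False by simp
      next
        case 2
        then have "?s j0 < ?s j" using c unfolding cond_def by auto
        moreover have "?s j \<le> ?s j0" using j0 that by auto
        ultimately show False by simp
      qed
    qed
  next
    assume "j = j0"
    then show "cond j" using j0 unfolding cond_def by auto
  qed
  have "(\<Sum>j\<le>n. Fb \<xi> j (\<lambda>k. p (j - 1 - k)) * Fa \<xi> (n - j) (\<lambda>k. p (j + k)))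
      = (\<Sum>j\<le>n. if j = j0 then cis (th \<xi> (ps p n)) else 0)"
  proof (rule sum.cong[OF refl])
    fix j assume "j \<in> {..n}"
    then show "Fb \<xi> j (\<lambda>k. p (j - 1 - k)) * Fa \<xi> (n - j) (\<lambda>k. p (j + k))
      = (if j = j0 then cis (th \<xi> (ps p n)) else 0)" using trm[of j] condj[of j] by simp
  qed
  also have "\<dots> = cis (th \<xi> (ps p n))" using j0 by simp
  finally show ?thesis by simp
qed

lemma summable_bounded_norm:
  fixes c :: "nat \<Rightarrow> complex"
  assumes "\<And>N. (\<Sum>n<N. norm (c n)) \<le> 1"
  shows "summable (\<lambda>n. norm (c n))" "(\<Sum>n. norm (c n)) \<le> 1"
proof -
  show s: "summable (\<lambda>n. norm (c n))"
    by (rule summableI_nonneg_bounded[of _ 1]) (use assms in auto)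
  show "(\<Sum>n. norm (c n)) \<le> 1"
    by (rule suminf_le_const[OF s]) (use assms in auto)
qed

lemma wh_bound:
  fixes a b c d :: "nat \<Rightarrow> complex" and \<phi> s :: complex
  assumes s1: "norm s < 1" and phi1: "norm \<phi> \<le> 1"
    and an: "\<And>n. norm (a n) \<le> 1" and bn: "\<And>n. norm (b n) \<le> 1"
    and cn: "\<And>N. (\<Sum>n<N. norm (c n)) \<le> 1" and dn: "\<And>N. (\<Sum>n<N. norm (d n)) \<le> 1"
    and a0: "a 0 = 1" and c0: "c 0 = 0" and b0: "b 0 = 1" and d0: "d 0 = 0"
    and ac: "\<And>n. a (Suc n) + c (Suc n) = \<phi> * a n"
    and bd: "\<And>n. b (Suc n) + d (Suc n) = \<phi> * b n"
    and conv: "\<And>n. (\<Sum>j\<le>n. b j * a (n - j)) = \<phi> ^ n"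
  shows "norm (1 - s * \<phi>) \<le> 2 * norm (1 - (\<Sum>n. c n * s ^ n))"
proof -
  have ns: "norm s ^ n \<le> 1" for n using s1 by (simp add: power_le_one)
  have geo: "summable (\<lambda>n. norm s ^ n)" using s1 by simp
  have sa: "summable (\<lambda>n. norm (a n * s ^ n))"
    by (rule summable_comparison_test[OF _ geo])
       (auto simp: norm_mult norm_power intro!: mult_left_le_one_le an exI[of _ 0] mult_le_one[of _ "norm s ^ _", simplified] )
  have sb: "summable (\<lambda>n. norm (b n * s ^ n))"
    by (rule summable_comparison_test[OF _ geo])
       (auto simp: norm_mult norm_power intro!: mult_left_le_one_le bn)
  have scn: "summable (\<lambda>n. norm (c n))" and scn1: "(\<Sum>n. norm (c n)) \<le> 1"
    using summable_bounded_norm[OF cn] by auto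
  have sdn: "summable (\<lambda>n. norm (d n))" and sdn1: "(\<Sum>n. norm (d n)) \<le> 1"
    using summable_bounded_norm[OF dn] by auto
  have sc: "summable (\<lambda>n. norm (c n * s ^ n))"
    by (rule summable_comparison_test[OF _ scn])
       (auto simp: norm_mult norm_power intro!: mult_right_le_one_le ns)
  have sd: "summable (\<lambda>n. norm (d n * s ^ n))"
    by (rule summable_comparison_test[OF _ sdn])
       (auto simp: norm_mult norm_power intro!: mult_right_le_one_le ns)
  define A where "A = (\<Sum>n. a n * s ^ n)"
  define B where "B = (\<Sum>n. b n * s ^ n)"
  define C where "C = (\<Sum>n. c n * s ^ n)"
  define D where "D = (\<Sum>n. d n * s ^ n)"
  have Asums: "(\<lambda>n. a n * s ^ n) sums A" unfolding A_def using summable_norm_cancel[OF sa] by (simp add: summable_sums)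
  have Bsums: "(\<lambda>n. b n * s ^ n) sums B" unfolding B_def using summable_norm_cancel[OF sb] by (simp add: summable_sums)
  have Csums: "(\<lambda>n. c n * s ^ n) sums C" unfolding C_def using summable_norm_cancel[OF sc] by (simp add: summable_sums)
  have Dsums: "(\<lambda>n. d n * s ^ n) sums D" unfolding D_def using summable_norm_cancel[OF sd] by (simp add: summable_sums)
  have eq1: "A + C = 1 + s * \<phi> * A"
  proof -
    have f1: "(\<lambda>n. a n * s ^ n + c n * s ^ n) sums (A + C)" by (rule sums_add[OF Asums Csums])
    have "(\<lambda>n. (s * \<phi>) * (a n * s ^ n)) sums (s * \<phi> * A)" by (rule sums_mult[OF Asums])
    moreover have "(s * \<phi>) * (a n * s ^ n) = a (Suc n) * s ^ Suc n + c (Suc n) * s ^ Suc n" for n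
    proof -
      have "a (Suc n) * s ^ Suc n + c (Suc n) * s ^ Suc n = (a (Suc n) + c (Suc n)) * s ^ Suc n"
        by (simp only: distrib_right)
      also have "\<dots> = s * \<phi> * (a n * s ^ n)" by (simp only: ac power_Suc) (simp only: ac_simps)
      finally show ?thesis by simp
    qed
    ultimately have f2: "(\<lambda>n. a (Suc n) * s ^ Suc n + c (Suc n) * s ^ Suc n) sums (s * \<phi> * A)" by simp
    have f3: "(\<lambda>n. a n * s ^ n + c n * s ^ n) sums (s * \<phi> * A + (a 0 * s ^ 0 + c 0 * s ^ 0))"
      using f2 by (subst sums_Suc_iff[symmetric]) simp
    have "A + C = s * \<phi> * A + (a 0 * s ^ 0 + c 0 * s ^ 0)" by (rule sums_unique2[OF f1 f3])
    then show ?thesis using a0 c0 by simp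
  qed
  have eq2: "B + D = 1 + s * \<phi> * B"
  proof -
    have f1: "(\<lambda>n. b n * s ^ n + d n * s ^ n) sums (B + D)" by (rule sums_add[OF Bsums Dsums])
    have "(\<lambda>n. (s * \<phi>) * (b n * s ^ n)) sums (s * \<phi> * B)" by (rule sums_mult[OF Bsums])
    moreover have "(s * \<phi>) * (b n * s ^ n) = b (Suc n) * s ^ Suc n + d (Suc n) * s ^ Suc n" for n
    proof -
      have "b (Suc n) * s ^ Suc n + d (Suc n) * s ^ Suc n = (b (Suc n) + d (Suc n)) * s ^ Suc n"
        by (simp only: distrib_right)
      also have "\<dots> = s * \<phi> * (b n * s ^ n)" by (simp only: bd power_Suc) (simp only: ac_simps)
      finally show ?thesis by simp
    qed
    ultimately have f2: "(\<lambda>n. b (Suc n) * s ^ Suc n + d (Suc n) * s ^ Suc n) sums (s * \<phi> * B)" by simp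
    have f3: "(\<lambda>n. b n * s ^ n + d n * s ^ n) sums (s * \<phi> * B + (b 0 * s ^ 0 + d 0 * s ^ 0))"
      using f2 by (subst sums_Suc_iff[symmetric]) simp
    have "B + D = s * \<phi> * B + (b 0 * s ^ 0 + d 0 * s ^ 0)" by (rule sums_unique2[OF f1 f3])
    then show ?thesis using b0 d0 by simp
  qed
  have sphi: "norm (s * \<phi>) < 1"
  proof -
    have "norm (s * \<phi>) = norm s * norm \<phi>" by (simp add: norm_mult)
    also have "\<dots> \<le> norm s * 1" by (rule mult_left_mono) (simp_all add: phi1)
    also have "\<dots> < 1" using s1 by simp
    finally show ?thesis .
  qed
  have eq3: "B * A = 1 / (1 - s * \<phi>)"
  proof -
    have "B * A = (\<Sum>k. \<Sum>i\<le>k. (b i * s ^ i) * (a (k - i) * s ^ (k - i)))"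
      unfolding A_def B_def by (rule Cauchy_product[OF sb sa])
    also have "\<dots> = (\<Sum>k. (s * \<phi>) ^ k)"
    proof (rule suminf_cong)
      fix k
      have "(\<Sum>i\<le>k. (b i * s ^ i) * (a (k - i) * s ^ (k - i))) = (\<Sum>i\<le>k. s ^ k * (b i * a (k - i)))"
        by (intro sum.cong refl) (auto simp: algebra_simps power_add[symmetric])
      also have "\<dots> = s ^ k * \<phi> ^ k" by (simp add: sum_distrib_left[symmetric] conv)
      finally show "(\<Sum>i\<le>k. (b i * s ^ i) * (a (k - i) * s ^ (k - i))) = (s * \<phi>) ^ k"
        by (simp add: power_mult_distrib)
    qed
    also have "\<dots> = 1 / (1 - s * \<phi>)" using geometric_sums[OF sphi] by (simp add: sums_iff)
    finally show ?thesis .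
  qed
  have ne: "1 - s * \<phi> \<noteq> 0" using sphi by auto
  have prod: "(1 - C) * (1 - D) = 1 - s * \<phi>"
  proof -
    have e1: "1 - C = A * (1 - s * \<phi>)" using eq1 by (simp add: algebra_simps)
    have e2: "1 - D = B * (1 - s * \<phi>)" using eq2 by (simp add: algebra_simps)
    have "(1 - C) * (1 - D) = (A * (1 - s * \<phi>)) * (B * (1 - s * \<phi>))" by (simp only: e1 e2)
    also have "\<dots> = (B * A) * (1 - s * \<phi>) * (1 - s * \<phi>)" by (simp only: mult_ac)
    finally have "(1 - C) * (1 - D) = (B * A) * (1 - s * \<phi>) * (1 - s * \<phi>)" .
    also have "\<dots> = 1 - s * \<phi>" using ne by (simp add: eq3)
    finally show ?thesis .
  qed
  have nD: "norm D \<le> 1"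
  proof -
    have "norm D \<le> (\<Sum>n. norm (d n * s ^ n))" unfolding D_def by (rule summable_norm[OF sd])
    also have "\<dots> \<le> (\<Sum>n. norm (d n))"
      by (rule suminf_le[OF _ sd sdn]) (auto simp: norm_mult norm_power intro!: mult_right_le_one_le ns)
    finally show ?thesis using sdn1 by simp
  qed
  have "norm (1 - D) \<le> 2" using norm_triangle_ineq4[of 1 D] nD by simp
  then have "norm (1 - s * \<phi>) \<le> norm (1 - C) * 2"
    unfolding prod[symmetric] norm_mult by (intro mult_left_mono) auto
  then show ?thesis unfolding C_def by simp
qed

lemma boundary_bound:
  fixes c :: "nat \<Rightarrow> complex" and \<phi> u :: complex
  assumes cn: "\<And>N. (\<Sum>n<N. norm (c n)) \<le> 1" and u: "norm u = 1" and phi1: "norm \<phi> \<le> 1"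
    and inner: "\<And>r. 0 \<le> r \<Longrightarrow> r < 1 \<Longrightarrow>
       norm (1 - (of_real r * u) * \<phi>) \<le> 2 * norm (1 - (\<Sum>n. c n * (of_real r * u) ^ n))"
  shows "1 - norm \<phi> \<le> 2 * norm (1 - (\<Sum>n. c n * u ^ n))"
proof -
  have scn: "summable (\<lambda>n. norm (c n))" using summable_bounded_norm[OF cn] by auto
  define g where "g r = (\<Sum>n. c n * (of_real r * u) ^ n)" for r :: real
  have ul: "uniform_limit {0..1} (\<lambda>N r. \<Sum>n<N. c n * (of_real r * u) ^ n) g sequentially"
    unfolding g_def
  proof (rule Weierstrass_m_test[OF _ scn])
    fix n and r :: real assume "r \<in> {0..1}"
    then show "norm (c n * (of_real r * u) ^ n) \<le> norm (c n)"
      using u by (auto simp: norm_mult norm_power intro!: mult_right_le_one_le power_le_one)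
  qed
  have cont: "continuous_on {0..1} g"
    by (rule uniform_limit_theorem[OF _ ul]) (auto intro!: always_eventually continuous_intros)
  define r where "r k = real k / real (Suc k)" for k
  have r01: "0 \<le> r k" "r k < 1" for k by (auto simp: r_def)
  have rlim: "r \<longlonglongrightarrow> 1" unfolding r_def by (rule LIMSEQ_n_over_Suc_n)
  have glim: "(\<lambda>k. g (r k)) \<longlonglongrightarrow> g 1"
    by (rule continuous_on_tendsto_compose[OF cont rlim]) (use r01 in \<open>auto intro!: always_eventually less_imp_le\<close>)
  have lim2: "(\<lambda>k. 2 * norm (1 - g (r k))) \<longlonglongrightarrow> 2 * norm (1 - g 1)"
    by (intro tendsto_intros glim)
  have "1 - norm \<phi> \<le> 2 * norm (1 - g (r k))" for k
  proof -
    have "1 - norm \<phi> \<le> 1 - r k * norm \<phi>"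
      using r01[of k] phi1 by (simp add: mult_left_le_one_le)
    also have "\<dots> \<le> norm (1 - (of_real (r k) * u) * \<phi>)"
    proof -
      have "norm ((of_real (r k) * u) * \<phi>) = r k * norm \<phi>" using u r01[of k] by (simp add: norm_mult)
      then show ?thesis using norm_triangle_ineq2[of 1 "(of_real (r k) * u) * \<phi>"] by simp
    qed
    also have "\<dots> \<le> 2 * norm (1 - g (r k))" unfolding g_def using inner r01 by blast
    finally show ?thesis .
  qed
  then have "1 - norm \<phi> \<le> 2 * norm (1 - g 1)"
    by (intro LIMSEQ_le_const[OF lim2]) auto
  then show ?thesis unfolding g_def by simp
qed

lemma comp_meas:
  "(\<lambda>x. x k) \<in> borel_measurable (PiM I (\<lambda>_. (borel :: ('b::topological_space) measure)))"
proof (cases "k \<in> I")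
  case True then show ?thesis by (rule measurable_component_singleton)
next
  case False
  have "(\<lambda>x. undefined) \<in> borel_measurable (PiM I (\<lambda>_. (borel :: 'b measure)))" by simp
  then show ?thesis
    by (rule measurable_cong[THEN iffD1, rotated]) (use False in \<open>auto simp: space_PiM PiE_def extensional_def\<close>)
qed

lemma ps_meas: "(\<lambda>x. ps x i) \<in> borel_measurable (PiM I (\<lambda>_. borel))"
  unfolding ps_def by (intro borel_measurable_sum comp_meas)

lemma th_cont: "continuous_on UNIV (th \<xi>)"
  unfolding th_def by (intro continuous_intros)

lemma th_meas[measurable]: "th \<xi> \<in> borel_measurable borel"
  by (rule borel_measurable_continuous_onI[OF th_cont])

lemma cth_meas: "(\<lambda>z. cis (th \<xi> z)) \<in> borel_measurable borel"
  by (intro borel_measurable_continuous_onI continuous_intros th_cont[THEN continuous_on_subset]) auto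

lemma cth_ps_meas: "(\<lambda>p. cis (th \<xi> (ps p n))) \<in> borel_measurable (PiM I (\<lambda>_. borel))"
  by (rule measurable_compose[OF ps_meas cth_meas])

lemma fst_ps_meas: "(\<lambda>p. fst (ps p n)) \<in> borel_measurable (PiM I (\<lambda>_. borel))"
  by (rule measurable_compose[OF ps_meas]) (intro borel_measurable_continuous_onI continuous_intros)

lemma pred_le_ps: "Measurable.pred (PiM I (\<lambda>_. borel)) (\<lambda>p. fst (ps p i) \<le> 0)"
  using fst_ps_meas[of i I] by measurable
lemma pred_gt_ps: "Measurable.pred (PiM I (\<lambda>_. borel)) (\<lambda>p. fst (ps p i) > 0)"
  using fst_ps_meas[of i I] by measurable

lemma meas_if0:
  fixes f :: "_ \<Rightarrow> complex"
  shows "Measurable.pred N P \<Longrightarrow> f \<in> borel_measurable N \<Longrightarrow> (\<lambda>x. if P x then f x else 0) \<in> borel_measurable N"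
  by (rule measurable_If) auto

lemma Fa_meas[measurable]: "Fa \<xi> n \<in> borel_measurable (PiM I (\<lambda>_. borel))"
  unfolding Fa_def by (intro meas_if0 cth_ps_meas pred_intros_finite pred_le_ps) auto
lemma Fb_meas[measurable]: "Fb \<xi> n \<in> borel_measurable (PiM I (\<lambda>_. borel))"
  unfolding Fb_def by (intro meas_if0 cth_ps_meas pred_intros_finite pred_gt_ps) auto
lemma Fc_meas[measurable]: "Fc \<xi> n \<in> borel_measurable (PiM I (\<lambda>_. borel))"
  unfolding Fc_def Cc_def by (intro meas_if0 cth_ps_meas pred_intros_finite pred_intros_logic pred_le_ps pred_gt_ps) auto
lemma Fd_meas[measurable]: "Fd \<xi> n \<in> borel_measurable (PiM I (\<lambda>_. borel))"
  unfolding Fd_def Cd_def by (intro meas_if0 cth_ps_meas pred_intros_finite pred_intros_logic pred_le_ps pred_gt_ps) auto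

lemma reidx_meas: "(\<lambda>x. restrict (\<lambda>k. x (\<sigma> k)) J) \<in> PiM I (\<lambda>_. borel) \<rightarrow>\<^sub>M PiM J (\<lambda>_. (borel :: ('b::topological_space) measure))"
  by (intro measurable_restrict comp_meas)

lemma Fa_local: "(\<And>k. k < n \<Longrightarrow> p k = q k) \<Longrightarrow> Fa \<xi> n p = Fa \<xi> n q"
proof -
  assume h: "\<And>k. k < n \<Longrightarrow> p k = q k"
  have "ps p i = ps q i" if "i \<le> n" for i using h that by (intro ps_local) auto
  then show ?thesis unfolding Fa_def by auto
qed
lemma Fb_local: "(\<And>k. k < n \<Longrightarrow> p k = q k) \<Longrightarrow> Fb \<xi> n p = Fb \<xi> n q"
proof -
  assume h: "\<And>k. k < n \<Longrightarrow> p k = q k"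
  have "ps p i = ps q i" if "i \<le> n" for i using h that by (intro ps_local) auto
  then show ?thesis unfolding Fb_def by auto
qed

lemma Fb_rev_meas: "(\<lambda>x. Fb \<xi> j (\<lambda>k. x (j - 1 - k))) \<in> borel_measurable (PiM I (\<lambda>_. borel))"
proof -
  have "(\<lambda>x. Fb \<xi> j (restrict (\<lambda>k. x (j - 1 - k)) {..<j})) \<in> borel_measurable (PiM I (\<lambda>_. borel))"
    by (rule measurable_compose[OF reidx_meas Fb_meas])
  moreover have "Fb \<xi> j (restrict (\<lambda>k. x (j - 1 - k)) {..<j}) = Fb \<xi> j (\<lambda>k. x (j - 1 - k))" for x
    by (rule Fb_local) auto
  ultimately show ?thesis by simp
qed
lemma Fa_shift_meas: "(\<lambda>x. Fa \<xi> m (\<lambda>k. x (j + k))) \<in> borel_measurable (PiM I (\<lambda>_. borel))"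
proof -
  have "(\<lambda>x. Fa \<xi> m (restrict (\<lambda>k. x (j + k)) {..<m})) \<in> borel_measurable (PiM I (\<lambda>_. borel))"
    by (rule measurable_compose[OF reidx_meas Fa_meas])
  moreover have "Fa \<xi> m (restrict (\<lambda>k. x (j + k)) {..<m}) = Fa \<xi> m (\<lambda>k. x (j + k))" for x
    by (rule Fa_local) auto
  ultimately show ?thesis by simp
qed

lemma Fc_local: "(\<And>k. k < n \<Longrightarrow> p k = q k) \<Longrightarrow> Fc \<xi> n p = Fc \<xi> n q"
proof -
  assume h: "\<And>k. k < n \<Longrightarrow> p k = q k"
  have "ps p i = ps q i" if "i \<le> n" for i using h that by (intro ps_local) auto
  then show ?thesis unfolding Fc_def Cc_def by auto
qed
lemma Fd_local: "(\<And>k. k < n \<Longrightarrow> p k = q k) \<Longrightarrow> Fd \<xi> n p = Fd \<xi> n q"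
proof -
  assume h: "\<And>k. k < n \<Longrightarrow> p k = q k"
  have "ps p i = ps q i" if "i \<le> n" for i using h that by (intro ps_local) auto
  then show ?thesis unfolding Fd_def Cd_def by auto
qed

lemma norm_Fa: "norm (Fa \<xi> n p) \<le> 1" by (simp add: Fa_def)
lemma norm_Fb: "norm (Fb \<xi> n p) \<le> 1" by (simp add: Fb_def)
lemma norm_Fc: "norm (Fc \<xi> n p) \<le> 1" by (simp add: Fc_def)
lemma norm_Fd: "norm (Fd \<xi> n p) \<le> 1" by (simp add: Fd_def)

locale rw = prob_space M for M :: "'a measure" +
  fixes Z :: "nat \<Rightarrow> 'a \<Rightarrow> real \<times> (real ^ 'm)"
  assumes ind: "indep_vars (\<lambda>_. borel) Z UNIV"
    and idd: "\<And>n. distr M borel (Z n) = distr M borel (Z 0)"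
begin

lemma Zm[measurable]: "Z n \<in> borel_measurable M"
  using ind unfolding indep_vars_def by auto

definition "\<mu> = distr M borel (Z 0)"

lemma mu_prob: "prob_space \<mu>"
  unfolding \<mu>_def by (rule prob_space_distr) simp

lemma sets_mu[simp, measurable_cong]: "sets \<mu> = sets borel"
  by (simp add: \<mu>_def)

lemma full_law: "distr M (PiM UNIV (\<lambda>_. borel)) (\<lambda>\<omega>. \<lambda>i\<in>UNIV. Z i \<omega>) = PiM UNIV (\<lambda>_. \<mu>)"
proof -
  have "distr M (PiM UNIV (\<lambda>_. borel)) (\<lambda>\<omega>. \<lambda>i\<in>UNIV. Z i \<omega>) = PiM UNIV (\<lambda>i. distr M borel (Z i))"
    using indep_vars_iff_distr_eq_PiM[where I=UNIV and X=Z and M'="\<lambda>_. borel"] ind by auto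
  also have "\<dots> = PiM UNIV (\<lambda>_. \<mu>)" unfolding \<mu>_def by (intro PiM_cong refl idd)
  finally show ?thesis .
qed

lemma law:
  assumes inj: "inj_on \<sigma> I"
  shows "distr M (PiM I (\<lambda>_. borel)) (\<lambda>\<omega>. \<lambda>n\<in>I. Z (\<sigma> n) \<omega>) = PiM I (\<lambda>_. \<mu>)"
proof -
  have m1: "(\<lambda>\<omega>. \<lambda>i\<in>UNIV. Z i \<omega>) \<in> M \<rightarrow>\<^sub>M PiM UNIV (\<lambda>_. borel)" by measurable
  have m2: "(\<lambda>x. \<lambda>n\<in>I. x (\<sigma> n)) \<in> PiM UNIV (\<lambda>_. borel) \<rightarrow>\<^sub>M PiM I (\<lambda>_. borel)"
    by (rule measurable_restrict) (auto intro: measurable_component_singleton)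
  have "distr M (PiM I (\<lambda>_. borel)) (\<lambda>\<omega>. \<lambda>n\<in>I. Z (\<sigma> n) \<omega>)
      = distr (distr M (PiM UNIV (\<lambda>_. borel)) (\<lambda>\<omega>. \<lambda>i\<in>UNIV. Z i \<omega>)) (PiM I (\<lambda>_. borel)) (\<lambda>x. \<lambda>n\<in>I. x (\<sigma> n))"
    by (subst distr_distr[OF m2 m1]) (simp add: comp_def)
  also have "\<dots> = distr (PiM UNIV (\<lambda>_. \<mu>)) (PiM I (\<lambda>_. borel)) (\<lambda>x. \<lambda>n\<in>I. x (\<sigma> n))"
    by (simp add: full_law)
  also have "\<dots> = distr (PiM UNIV (\<lambda>_. \<mu>)) (PiM I (\<lambda>_. \<mu>)) (\<lambda>x. \<lambda>n\<in>I. x (\<sigma> n))"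
    by (intro distr_cong refl sets_PiM_cong) auto
  also have "\<dots> = PiM I (\<lambda>_. \<mu>)"
    using distr_PiM_reindex[of UNIV "\<lambda>_. \<mu>" \<sigma> I] mu_prob inj by simp
  finally show ?thesis .
qed

lemma inv:
  fixes F :: "(nat \<Rightarrow> real \<times> (real ^ 'm)) \<Rightarrow> complex"
  assumes inj: "inj_on \<sigma> I" and F: "F \<in> borel_measurable (PiM I (\<lambda>_. borel))"
  shows "(LINT \<omega>|M. F (\<lambda>n\<in>I. Z (\<sigma> n) \<omega>)) = (LINT \<omega>|M. F (\<lambda>n\<in>I. Z n \<omega>))"
proof -
  have m: "(\<lambda>\<omega>. \<lambda>n\<in>I. Z (\<sigma> n) \<omega>) \<in> M \<rightarrow>\<^sub>M PiM I (\<lambda>_. borel)" for \<sigma>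
    by (rule measurable_restrict) simp
  have "(LINT \<omega>|M. F (\<lambda>n\<in>I. Z (\<sigma> n) \<omega>)) = integral\<^sup>L (distr M (PiM I (\<lambda>_. borel)) (\<lambda>\<omega>. \<lambda>n\<in>I. Z (\<sigma> n) \<omega>)) F"
    by (rule integral_distr[OF m F, symmetric])
  also have "\<dots> = integral\<^sup>L (PiM I (\<lambda>_. \<mu>)) F" by (subst law[OF inj]) (rule refl)
  also have "\<dots> = integral\<^sup>L (distr M (PiM I (\<lambda>_. borel)) (\<lambda>\<omega>. \<lambda>n\<in>I. Z (id n) \<omega>)) F"
    by (subst law[OF inj_on_id]) (rule refl)
  also have "\<dots> = (LINT \<omega>|M. F (\<lambda>n\<in>I. Z (id n) \<omega>))"
    by (rule integral_distr[OF m F])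
  finally show ?thesis by simp
qed

lemma integrable_bdd:
  fixes f :: "'a \<Rightarrow> complex"
  assumes "f \<in> borel_measurable M" "\<And>\<omega>. norm (f \<omega>) \<le> 1"
  shows "integrable M f"
  using assms by (intro integrable_const_bound[where B=1] AE_I2) auto

lemma norm_int_bdd:
  fixes f :: "'a \<Rightarrow> complex"
  assumes "f \<in> borel_measurable M" "\<And>\<omega>. norm (f \<omega>) \<le> 1"
  shows "norm (LINT \<omega>|M. f \<omega>) \<le> 1"
proof -
  have "norm (LINT \<omega>|M. f \<omega>) \<le> (LINT \<omega>|M. norm (f \<omega>))" by (rule integral_norm_bound)
  also have "\<dots> \<le> (LINT \<omega>|M. 1)"
    by (rule integral_mono[OF integrable_norm[OF integrable_bdd[OF assms]]]) (simp_all add: assms(2))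
  finally show ?thesis by (simp add: prob_space)
qed

lemma indep_prod:
  fixes f g :: "(nat \<Rightarrow> real \<times> (real ^ 'm)) \<Rightarrow> complex"
  assumes AB: "A \<inter> B = {}"
    and f: "f \<in> borel_measurable (PiM A (\<lambda>_. borel))" and g: "g \<in> borel_measurable (PiM B (\<lambda>_. borel))"
    and fb: "\<And>x. norm (f x) \<le> 1" and gb: "\<And>x. norm (g x) \<le> 1"
  shows "(LINT \<omega>|M. f (restrict (\<lambda>i. Z i \<omega>) A) * g (restrict (\<lambda>i. Z i \<omega>) B))
     = (LINT \<omega>|M. f (restrict (\<lambda>i. Z i \<omega>) A)) * (LINT \<omega>|M. g (restrict (\<lambda>i. Z i \<omega>) B))"
proof -
  have iv: "indep_var (PiM A (\<lambda>_. borel)) (\<lambda>\<omega>. restrict (\<lambda>i. Z i \<omega>) A) (PiM B (\<lambda>_. borel)) (\<lambda>\<omega>. restrict (\<lambda>i. Z i \<omega>) B)"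
    by (rule indep_var_restrict[OF ind AB]) auto
  have iv2: "indep_var borel (f \<circ> (\<lambda>\<omega>. restrict (\<lambda>i. Z i \<omega>) A)) borel (g \<circ> (\<lambda>\<omega>. restrict (\<lambda>i. Z i \<omega>) B))"
    by (rule indep_var_compose[OF iv f g])
  have mf: "(\<lambda>\<omega>. f (restrict (\<lambda>i. Z i \<omega>) A)) \<in> borel_measurable M"
    by (rule measurable_compose[OF _ f]) (auto intro!: measurable_restrict)
  have mg: "(\<lambda>\<omega>. g (restrict (\<lambda>i. Z i \<omega>) B)) \<in> borel_measurable M"
    by (rule measurable_compose[OF _ g]) (auto intro!: measurable_restrict)
  show ?thesis
    using indep_var_lebesgue_integral[OF iv2] integrable_bdd[OF mf fb] integrable_bdd[OF mg gb]
    by (simp add: comp_def)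
qed


lemma meas_path:
  assumes F: "F \<in> borel_measurable (PiM I (\<lambda>_. borel))" and loc: "\<And>p. F (restrict p I) = F p"
  shows "(\<lambda>\<omega>. F (\<lambda>k. Z k \<omega>)) \<in> borel_measurable M"
proof -
  have "(\<lambda>\<omega>. F (restrict (\<lambda>k. Z k \<omega>) I)) \<in> borel_measurable M"
    by (rule measurable_compose[OF _ F]) (rule measurable_restrict, simp)
  then show ?thesis by (simp add: loc)
qed

lemma Fa_path[measurable]: "(\<lambda>\<omega>. Fa \<xi> n (\<lambda>k. Z k \<omega>)) \<in> borel_measurable M"
  by (rule meas_path[OF Fa_meas, of _ _ "{..<n}"]) (rule Fa_local, simp)
lemma Fb_path[measurable]: "(\<lambda>\<omega>. Fb \<xi> n (\<lambda>k. Z k \<omega>)) \<in> borel_measurable M"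
  by (rule meas_path[OF Fb_meas, of _ _ "{..<n}"]) (rule Fb_local, simp)
lemma Fc_path[measurable]: "(\<lambda>\<omega>. Fc \<xi> n (\<lambda>k. Z k \<omega>)) \<in> borel_measurable M"
  by (rule meas_path[OF Fc_meas, of _ _ "{..<n}"]) (rule Fc_local, simp)
lemma Fd_path[measurable]: "(\<lambda>\<omega>. Fd \<xi> n (\<lambda>k. Z k \<omega>)) \<in> borel_measurable M"
  by (rule meas_path[OF Fd_meas, of _ _ "{..<n}"]) (rule Fd_local, simp)

lemma cthZ_meas[measurable]: "(\<lambda>\<omega>. cis (th \<xi> (Z n \<omega>))) \<in> borel_measurable M"
  by (rule measurable_compose[OF Zm cth_meas])

definition "phi \<xi> = (LINT \<omega>|M. cis (th \<xi> (Z 0 \<omega>)))"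
definition "ca \<xi> n = (LINT \<omega>|M. Fa \<xi> n (\<lambda>k. Z k \<omega>))"
definition "cb \<xi> n = (LINT \<omega>|M. Fb \<xi> n (\<lambda>k. Z k \<omega>))"
definition "cc \<xi> n = (LINT \<omega>|M. Fc \<xi> n (\<lambda>k. Z k \<omega>))"
definition "cd \<xi> n = (LINT \<omega>|M. Fd \<xi> n (\<lambda>k. Z k \<omega>))"

lemma phi_n: "(LINT \<omega>|M. cis (th \<xi> (Z n \<omega>))) = phi \<xi>"
proof -
  have "(LINT \<omega>|M. cis (th \<xi> (Z n \<omega>))) = integral\<^sup>L (distr M borel (Z n)) (\<lambda>z. cis (th \<xi> z))"
    by (rule integral_distr[symmetric, OF Zm cth_meas])
  also have "\<dots> = integral\<^sup>L (distr M borel (Z 0)) (\<lambda>z. cis (th \<xi> z))" by (simp only: idd[of n])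
  also have "\<dots> = phi \<xi>" unfolding phi_def by (rule integral_distr[OF Zm cth_meas])
  finally show ?thesis .
qed

lemma norm_phi: "norm (phi \<xi>) \<le> 1"
  unfolding phi_def by (rule norm_int_bdd) auto
lemma norm_ca: "norm (ca \<xi> n) \<le> 1"
  unfolding ca_def by (rule norm_int_bdd[OF Fa_path norm_Fa])
lemma norm_cb: "norm (cb \<xi> n) \<le> 1"
  unfolding cb_def by (rule norm_int_bdd[OF Fb_path norm_Fb])

lemma ca_0: "ca \<xi> 0 = 1" by (simp add: ca_def prob_space)
lemma cb_0: "cb \<xi> 0 = 1" by (simp add: cb_def prob_space)
lemma cc_0: "cc \<xi> 0 = 0" by (simp add: cc_def)
lemma cd_0: "cd \<xi> 0 = 0" by (simp add: cd_def)

lemma sum_norm_cc: "(\<Sum>n<N. norm (cc \<xi> n)) \<le> 1"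
proof -
  have "(\<Sum>n<N. norm (cc \<xi> n)) \<le> (\<Sum>n<N. LINT \<omega>|M. norm (Fc \<xi> n (\<lambda>k. Z k \<omega>)))"
    unfolding cc_def by (intro sum_mono integral_norm_bound)
  also have "\<dots> = (LINT \<omega>|M. (\<Sum>n<N. norm (Fc \<xi> n (\<lambda>k. Z k \<omega>))))"
    by (rule Bochner_Integration.integral_sum[symmetric]) (auto intro!: integrable_norm integrable_bdd Fc_path norm_Fc)
  also have "\<dots> \<le> (LINT \<omega>|M. 1)"
    by (rule integral_mono) (auto intro!: Bochner_Integration.integrable_sum integrable_norm integrable_bdd Fc_path norm_Fc Fc_sum_le)
  finally show ?thesis by (simp add: prob_space)
qed

lemma sum_norm_cd: "(\<Sum>n<N. norm (cd \<xi> n)) \<le> 1"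
proof -
  have "(\<Sum>n<N. norm (cd \<xi> n)) \<le> (\<Sum>n<N. LINT \<omega>|M. norm (Fd \<xi> n (\<lambda>k. Z k \<omega>)))"
    unfolding cd_def by (intro sum_mono integral_norm_bound)
  also have "\<dots> = (LINT \<omega>|M. (\<Sum>n<N. norm (Fd \<xi> n (\<lambda>k. Z k \<omega>))))"
    by (rule Bochner_Integration.integral_sum[symmetric]) (auto intro!: integrable_norm integrable_bdd Fd_path norm_Fd)
  also have "\<dots> \<le> (LINT \<omega>|M. 1)"
    by (rule integral_mono) (auto intro!: Bochner_Integration.integrable_sum integrable_norm integrable_bdd Fd_path norm_Fd Fd_sum_le)
  finally show ?thesis by (simp add: prob_space)
qed


lemma ac_rec: "ca \<xi> (Suc n) + cc \<xi> (Suc n) = phi \<xi> * ca \<xi> n"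
proof -
  define g where "g x = cis (th \<xi> (x n))" for x :: "nat \<Rightarrow> real \<times> (real ^ 'm)"
  have gm: "g \<in> borel_measurable (PiM {n} (\<lambda>_. borel))"
    unfolding g_def by (rule measurable_compose[OF comp_meas cth_meas])
  have "ca \<xi> (Suc n) + cc \<xi> (Suc n) = (LINT \<omega>|M. Fa \<xi> (Suc n) (\<lambda>k. Z k \<omega>) + Fc \<xi> (Suc n) (\<lambda>k. Z k \<omega>))"
    unfolding ca_def cc_def
    by (rule Bochner_Integration.integral_add[symmetric]) (auto intro!: integrable_bdd norm_Fa norm_Fc)
  also have "\<dots> = (LINT \<omega>|M. Fa \<xi> n (restrict (\<lambda>i. Z i \<omega>) {..<n}) * g (restrict (\<lambda>i. Z i \<omega>) {n}))"
  proof (rule Bochner_Integration.integral_cong[OF refl])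
    fix \<omega>
    have "Fa \<xi> n (restrict (\<lambda>i. Z i \<omega>) {..<n}) = Fa \<xi> n (\<lambda>k. Z k \<omega>)" by (rule Fa_local) simp
    then show "Fa \<xi> (Suc n) (\<lambda>k. Z k \<omega>) + Fc \<xi> (Suc n) (\<lambda>k. Z k \<omega>)
      = Fa \<xi> n (restrict (\<lambda>i. Z i \<omega>) {..<n}) * g (restrict (\<lambda>i. Z i \<omega>) {n})"
      by (simp add: Fa_Suc g_def)
  qed
  also have "\<dots> = (LINT \<omega>|M. Fa \<xi> n (restrict (\<lambda>i. Z i \<omega>) {..<n})) * (LINT \<omega>|M. g (restrict (\<lambda>i. Z i \<omega>) {n}))"
    by (rule indep_prod[OF _ Fa_meas gm norm_Fa]) (auto simp: g_def)
  also have "(LINT \<omega>|M. Fa \<xi> n (restrict (\<lambda>i. Z i \<omega>) {..<n})) = ca \<xi> n"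
    unfolding ca_def by (intro Bochner_Integration.integral_cong refl Fa_local) simp
  also have "(LINT \<omega>|M. g (restrict (\<lambda>i. Z i \<omega>) {n})) = phi \<xi>"
    using phi_n[of \<xi> n] by (simp add: g_def)
  finally show ?thesis by (simp add: mult.commute)
qed

lemma bd_rec: "cb \<xi> (Suc n) + cd \<xi> (Suc n) = phi \<xi> * cb \<xi> n"
proof -
  define g where "g x = cis (th \<xi> (x n))" for x :: "nat \<Rightarrow> real \<times> (real ^ 'm)"
  have gm: "g \<in> borel_measurable (PiM {n} (\<lambda>_. borel))"
    unfolding g_def by (rule measurable_compose[OF comp_meas cth_meas])
  have "cb \<xi> (Suc n) + cd \<xi> (Suc n) = (LINT \<omega>|M. Fb \<xi> (Suc n) (\<lambda>k. Z k \<omega>) + Fd \<xi> (Suc n) (\<lambda>k. Z k \<omega>))"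
    unfolding cb_def cd_def
    by (rule Bochner_Integration.integral_add[symmetric]) (auto intro!: integrable_bdd norm_Fb norm_Fd)
  also have "\<dots> = (LINT \<omega>|M. Fb \<xi> n (restrict (\<lambda>i. Z i \<omega>) {..<n}) * g (restrict (\<lambda>i. Z i \<omega>) {n}))"
  proof (rule Bochner_Integration.integral_cong[OF refl])
    fix \<omega>
    have "Fb \<xi> n (restrict (\<lambda>i. Z i \<omega>) {..<n}) = Fb \<xi> n (\<lambda>k. Z k \<omega>)" by (rule Fb_local) simp
    then show "Fb \<xi> (Suc n) (\<lambda>k. Z k \<omega>) + Fd \<xi> (Suc n) (\<lambda>k. Z k \<omega>)
      = Fb \<xi> n (restrict (\<lambda>i. Z i \<omega>) {..<n}) * g (restrict (\<lambda>i. Z i \<omega>) {n})"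
      by (simp add: Fb_Suc g_def)
  qed
  also have "\<dots> = (LINT \<omega>|M. Fb \<xi> n (restrict (\<lambda>i. Z i \<omega>) {..<n})) * (LINT \<omega>|M. g (restrict (\<lambda>i. Z i \<omega>) {n}))"
    by (rule indep_prod[OF _ Fb_meas gm norm_Fb]) (auto simp: g_def)
  also have "(LINT \<omega>|M. Fb \<xi> n (restrict (\<lambda>i. Z i \<omega>) {..<n})) = cb \<xi> n"
    unfolding cb_def by (intro Bochner_Integration.integral_cong refl Fb_local) simp
  also have "(LINT \<omega>|M. g (restrict (\<lambda>i. Z i \<omega>) {n})) = phi \<xi>"
    using phi_n[of \<xi> n] by (simp add: g_def)
  finally show ?thesis by (simp add: mult.commute)
qed

lemma phi_pow: "(LINT \<omega>|M. cis (th \<xi> (ps (\<lambda>k. Z k \<omega>) n))) = phi \<xi> ^ n"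
proof -
  have iv: "indep_vars (\<lambda>_. borel) (\<lambda>k \<omega>. cis (th \<xi> (Z k \<omega>))) {..<n}"
    by (rule indep_vars_compose2[OF indep_vars_subset[OF ind], where Y="\<lambda>_ z. cis (th \<xi> z)"])
       (auto intro: cth_meas)
  have "(LINT \<omega>|M. cis (th \<xi> (ps (\<lambda>k. Z k \<omega>) n))) = (LINT \<omega>|M. (\<Prod>k\<in>{..<n}. cis (th \<xi> (Z k \<omega>))))"
    by (simp add: cis_th_ps)
  also have "\<dots> = (\<Prod>k\<in>{..<n}. LINT \<omega>|M. cis (th \<xi> (Z k \<omega>)))"
    by (rule indep_vars_lebesgue_integral[OF _ iv]) (auto intro!: integrable_bdd)
  also have "\<dots> = (\<Prod>k\<in>{..<n}. phi \<xi>)" by (simp add: phi_n)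
  finally show ?thesis by simp
qed

lemma conv_id: "(\<Sum>j\<le>n. cb \<xi> j * ca \<xi> (n - j)) = phi \<xi> ^ n"
proof -
  define f where "f j x = Fb \<xi> j (\<lambda>k. x (j - 1 - k))" for j and x :: "nat \<Rightarrow> real \<times> (real ^ 'm)"
  define g where "g j x = Fa \<xi> (n - j) (\<lambda>k. x (j + k))" for j and x :: "nat \<Rightarrow> real \<times> (real ^ 'm)"
  have fm: "f j \<in> borel_measurable (PiM I (\<lambda>_. borel))" for j I unfolding f_def by (rule Fb_rev_meas)
  have gm: "g j \<in> borel_measurable (PiM I (\<lambda>_. borel))" for j I unfolding g_def by (rule Fa_shift_meas)
  have fb: "norm (f j x) \<le> 1" for j x unfolding f_def by (rule norm_Fb)
  have gb: "norm (g j x) \<le> 1" for j x unfolding g_def by (rule norm_Fa)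
  have floc: "f j (restrict p {..<j}) = f j p" for j p unfolding f_def by (rule Fb_local) auto
  have gloc: "g j (restrict p {j..<n}) = g j p" if "j \<le> n" for j p unfolding g_def by (rule Fa_local) auto
  have fZm: "(\<lambda>\<omega>. f j (\<lambda>k. Z k \<omega>)) \<in> borel_measurable M" for j
    by (rule meas_path[OF fm floc])
  have gZm: "(\<lambda>\<omega>. g j (\<lambda>k. Z k \<omega>)) \<in> borel_measurable M" if "j \<le> n" for j
    by (rule meas_path[OF gm gloc[OF that]])
  have trm: "(LINT \<omega>|M. f j (\<lambda>k. Z k \<omega>) * g j (\<lambda>k. Z k \<omega>)) = cb \<xi> j * ca \<xi> (n - j)" if j: "j \<le> n" for j
  proof -
    have "(LINT \<omega>|M. f j (\<lambda>k. Z k \<omega>) * g j (\<lambda>k. Z k \<omega>))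
        = (LINT \<omega>|M. f j (restrict (\<lambda>i. Z i \<omega>) {..<j}) * g j (restrict (\<lambda>i. Z i \<omega>) {j..<n}))"
      by (simp add: floc gloc[OF j])
    also have "\<dots> = (LINT \<omega>|M. f j (restrict (\<lambda>i. Z i \<omega>) {..<j})) * (LINT \<omega>|M. g j (restrict (\<lambda>i. Z i \<omega>) {j..<n}))"
      by (rule indep_prod[OF _ fm gm fb gb]) auto
    also have "(LINT \<omega>|M. f j (restrict (\<lambda>i. Z i \<omega>) {..<j})) = cb \<xi> j"
    proof -
      have "(LINT \<omega>|M. f j (restrict (\<lambda>i. Z i \<omega>) {..<j})) = (LINT \<omega>|M. Fb \<xi> j (\<lambda>k\<in>{..<j}. Z (j - 1 - k) \<omega>))"
        unfolding f_def by (intro Bochner_Integration.integral_cong refl Fb_local) auto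
      also have "\<dots> = (LINT \<omega>|M. Fb \<xi> j (\<lambda>k\<in>{..<j}. Z k \<omega>))"
        by (rule inv[OF _ Fb_meas]) (auto simp: inj_on_def)
      also have "\<dots> = cb \<xi> j"
        unfolding cb_def by (intro Bochner_Integration.integral_cong refl Fb_local) auto
      finally show ?thesis .
    qed
    also have "(LINT \<omega>|M. g j (restrict (\<lambda>i. Z i \<omega>) {j..<n})) = ca \<xi> (n - j)"
    proof -
      have "(LINT \<omega>|M. g j (restrict (\<lambda>i. Z i \<omega>) {j..<n})) = (LINT \<omega>|M. Fa \<xi> (n - j) (\<lambda>k\<in>{..<n - j}. Z (j + k) \<omega>))"
        unfolding g_def by (intro Bochner_Integration.integral_cong refl Fa_local) auto
      also have "\<dots> = (LINT \<omega>|M. Fa \<xi> (n - j) (\<lambda>k\<in>{..<n - j}. Z k \<omega>))"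
        by (rule inv[OF _ Fa_meas]) (auto simp: inj_on_def)
      also have "\<dots> = ca \<xi> (n - j)"
        unfolding ca_def by (intro Bochner_Integration.integral_cong refl Fa_local) auto
      finally show ?thesis .
    qed
    finally show ?thesis .
  qed
  have "phi \<xi> ^ n = (LINT \<omega>|M. cis (th \<xi> (ps (\<lambda>k. Z k \<omega>) n)))" by (rule phi_pow[symmetric])
  also have "\<dots> = (LINT \<omega>|M. (\<Sum>j\<le>n. f j (\<lambda>k. Z k \<omega>) * g j (\<lambda>k. Z k \<omega>)))"
    unfolding f_def g_def by (subst first_max_decomp) (rule refl)
  also have "\<dots> = (\<Sum>j\<le>n. LINT \<omega>|M. f j (\<lambda>k. Z k \<omega>) * g j (\<lambda>k. Z k \<omega>))"
  proof (rule Bochner_Integration.integral_sum)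
    fix j assume "j \<in> {..n}"
    then show "integrable M (\<lambda>\<omega>. f j (\<lambda>k. Z k \<omega>) * g j (\<lambda>k. Z k \<omega>))"
      by (intro integrable_bdd borel_measurable_times fZm gZm)
         (auto simp: norm_mult intro!: mult_le_one fb gb)
  qed
  also have "\<dots> = (\<Sum>j\<le>n. cb \<xi> j * ca \<xi> (n - j))"
    by (intro sum.cong refl trm) auto
  finally show ?thesis by simp
qed

lemma key_bound: "1 - norm (phi \<xi>) \<le> 2 * norm (1 - (\<Sum>n. cc \<xi> n * cis t ^ n))"
proof (rule boundary_bound[OF sum_norm_cc _ norm_phi])
  show "norm (cis t) = 1" by simp
  fix r :: real assume r: "0 \<le> r" "r < 1"
  show "norm (1 - (of_real r * cis t) * phi \<xi>) \<le> 2 * norm (1 - (\<Sum>n. cc \<xi> n * (of_real r * cis t) ^ n))"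
    by (rule wh_bound[OF _ norm_phi norm_ca norm_cb sum_norm_cc sum_norm_cd ca_0 cc_0 cb_0 cd_0 ac_rec bd_rec conv_id])
       (use r in \<open>simp add: norm_mult\<close>)
qed

end

context rw begin

lemma fst_walk: "fst (walk Z n \<omega>) = (\<Sum>k<n. fst (Z k \<omega>))"
  by (simp add: walk_def fst_sum)

lemma walk_ps: "walk Z n \<omega> = ps (\<lambda>k. Z k \<omega>) n"
  by (simp add: walk_def ps_def)

lemma int_idd:
  fixes h :: "real \<times> (real ^ 'm) \<Rightarrow> real"
  assumes h: "h \<in> borel_measurable borel"
  shows "(LINT \<omega>|M. h (Z k \<omega>)) = (LINT \<omega>|M. h (Z 0 \<omega>))"
proof -
  have "(LINT \<omega>|M. h (Z k \<omega>)) = integral\<^sup>L (distr M borel (Z k)) h"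
    by (rule integral_distr[symmetric, OF Zm h])
  also have "\<dots> = integral\<^sup>L (distr M borel (Z 0)) h" by (simp only: idd[of k])
  also have "\<dots> = (LINT \<omega>|M. h (Z 0 \<omega>))" by (rule integral_distr[OF Zm h])
  finally show ?thesis .
qed

lemma distr_idd:
  fixes h :: "real \<times> (real ^ 'm) \<Rightarrow> real"
  assumes h: "h \<in> borel_measurable borel"
  shows "distr M borel (\<lambda>\<omega>. h (Z k \<omega>)) = distr M borel (\<lambda>\<omega>. h (Z 0 \<omega>))"
proof -
  have "distr M borel (\<lambda>\<omega>. h (Z k \<omega>)) = distr (distr M borel (Z k)) borel h"
    by (subst distr_distr[OF h Zm]) (simp add: comp_def)
  also have "\<dots> = distr (distr M borel (Z 0)) borel h" by (simp only: idd[of k])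
  also have "\<dots> = distr M borel (\<lambda>\<omega>. h (Z 0 \<omega>))"
    by (subst distr_distr[OF h Zm]) (simp add: comp_def)
  finally show ?thesis .
qed

lemma fst_meas[measurable]: "(fst :: real \<times> (real ^ 'm) \<Rightarrow> real) \<in> borel_measurable borel"
  by (intro borel_measurable_continuous_onI continuous_intros)

lemma fstZ[measurable]: "(\<lambda>\<omega>. fst (Z k \<omega>)) \<in> borel_measurable M"
  by (rule measurable_compose[OF Zm fst_meas])

lemma weak_law:
  assumes hyp: "(\<integral>\<^sup>+ \<omega>. ennreal (max 0 (- fst (Z 0 \<omega>))) \<partial>M) < (\<integral>\<^sup>+ \<omega>. ennreal (max 0 (fst (Z 0 \<omega>))) \<partial>M)"
    and eps: "\<epsilon> > 0"
  shows "\<exists>n. prob {\<omega>\<in>space M. fst (walk Z n \<omega>) \<le> 0} \<le> \<epsilon>"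
proof -
  define X where "X \<omega> = fst (Z 0 \<omega>)" for \<omega>
  define Xm where "Xm \<omega> = max 0 (- X \<omega>)" for \<omega>
  have X_meas[measurable]: "X \<in> borel_measurable M" unfolding X_def by (rule fstZ)
  have Xm_meas[measurable]: "Xm \<in> borel_measurable M" unfolding Xm_def by measurable
  have Xm_int: "integrable M Xm"
  proof (rule integrableI_nonneg)
    show "AE x in M. 0 \<le> Xm x" by (simp add: Xm_def)
    have "(\<integral>\<^sup>+ \<omega>. ennreal (Xm \<omega>) \<partial>M) < \<top>"
      using hyp unfolding Xm_def X_def using order.strict_trans2 top_greatest by blast
    then show "(\<integral>\<^sup>+ \<omega>. ennreal (Xm \<omega>) \<partial>M) < \<infinity>" by simp
  qed (simp)
  define fK where "fK K \<omega> = ennreal (min (max 0 (X \<omega>)) (real K))" for K :: nat and \<omega>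
  have sup: "(\<integral>\<^sup>+ \<omega>. ennreal (max 0 (X \<omega>)) \<partial>M) = (SUP K. integral\<^sup>N M (fK K))"
  proof -
    have pw: "ennreal (max 0 (X \<omega>)) = (SUP K. fK K \<omega>)" for \<omega>
    proof (rule antisym)
      obtain K :: nat where "max 0 (X \<omega>) \<le> real K" using real_arch_simple by blast
      then have "ennreal (max 0 (X \<omega>)) = fK K \<omega>" unfolding fK_def by simp
      then show "ennreal (max 0 (X \<omega>)) \<le> (SUP K. fK K \<omega>)" by (metis SUP_upper UNIV_I)
      show "(SUP K. fK K \<omega>) \<le> ennreal (max 0 (X \<omega>))"
        unfolding fK_def by (rule SUP_least) (rule ennreal_leI, simp)
    qed
    have "(\<integral>\<^sup>+ \<omega>. ennreal (max 0 (X \<omega>)) \<partial>M) = (\<integral>\<^sup>+ \<omega>. (SUP K. fK K \<omega>) \<partial>M)"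
      by (rule nn_integral_cong) (rule pw)
    also have "\<dots> = (SUP K. integral\<^sup>N M (fK K))"
    proof (rule nn_integral_monotone_convergence_SUP)
      show "incseq fK" unfolding fK_def
        by (auto simp: incseq_def le_fun_def intro!: ennreal_leI)
      show "fK i \<in> borel_measurable M" for i unfolding fK_def by measurable
    qed
    finally show ?thesis .
  qed
  obtain K :: nat where K: "(\<integral>\<^sup>+ \<omega>. ennreal (Xm \<omega>) \<partial>M) < integral\<^sup>N M (fK K)"
    using hyp unfolding Xm_def X_def[symmetric] sup by (auto simp: less_SUP_iff)
  define mK where "mK = (LINT \<omega>|M. min (X \<omega>) (real K))"
  have intP: "integrable M (\<lambda>\<omega>. min (max 0 (X \<omega>)) (real K))"
    by (rule integrable_const_bound[where B="real K"]) auto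
  have mK_pos: "mK > 0"
  proof -
    have "mK = (LINT \<omega>|M. min (max 0 (X \<omega>)) (real K) - Xm \<omega>)"
      unfolding mK_def Xm_def by (intro Bochner_Integration.integral_cong refl) auto
    also have "\<dots> = (LINT \<omega>|M. min (max 0 (X \<omega>)) (real K)) - (LINT \<omega>|M. Xm \<omega>)"
      by (rule Bochner_Integration.integral_diff[OF intP Xm_int])
    finally have mK: "mK = (LINT \<omega>|M. min (max 0 (X \<omega>)) (real K)) - (LINT \<omega>|M. Xm \<omega>)" .
    have e1: "(\<integral>\<^sup>+ \<omega>. ennreal (Xm \<omega>) \<partial>M) = ennreal (LINT \<omega>|M. Xm \<omega>)"
      by (rule nn_integral_eq_integral[OF Xm_int]) (simp add: Xm_def)
    have e2: "integral\<^sup>N M (fK K) = ennreal (LINT \<omega>|M. min (max 0 (X \<omega>)) (real K))"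
      unfolding fK_def by (rule nn_integral_eq_integral[OF intP]) simp
    have "ennreal (LINT \<omega>|M. Xm \<omega>) < ennreal (LINT \<omega>|M. min (max 0 (X \<omega>)) (real K))"
      using K e1 e2 by simp
    then have "(LINT \<omega>|M. Xm \<omega>) < (LINT \<omega>|M. min (max 0 (X \<omega>)) (real K))"
    proof -
      have nn: "0 \<le> (LINT \<omega>|M. Xm \<omega>)" by (rule integral_nonneg_AE) (simp add: Xm_def)
      show ?thesis using ennreal_less_iff[OF nn] \<open>ennreal (LINT \<omega>|M. Xm \<omega>) < _\<close> by blast
    qed
    then show ?thesis using mK by simp
  qed
  have Kpos: "real K > 0"
  proof (rule ccontr)
    assume "\<not> real K > 0"
    then have "K = 0" by simp
    then have "mK = (LINT \<omega>|M. - Xm \<omega>)" unfolding mK_def Xm_def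
      by (intro Bochner_Integration.integral_cong refl) auto
    also have "\<dots> = - (LINT \<omega>|M. Xm \<omega>)" by simp
    also have "\<dots> \<le> 0" by (simp add: Xm_def)
    finally have "mK \<le> 0" .
    then show False using mK_pos by simp
  qed
  define \<delta> where "\<delta> = mK / 2"
  have \<delta>pos: "\<delta> > 0" using mK_pos by (simp add: \<delta>_def)
  define R where "R L \<omega> = max 0 (- real L - X \<omega>)" for L :: nat and \<omega>
  have R_meas[measurable]: "R L \<in> borel_measurable M" for L unfolding R_def by measurable
  have Rlim: "(\<lambda>L. LINT \<omega>|M. R L \<omega>) \<longlonglongrightarrow> (LINT \<omega>|M. 0)"
  proof (rule integral_dominated_convergence[where w=Xm])
    show "AE x in M. (\<lambda>i. R i x) \<longlonglongrightarrow> 0"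
    proof (rule AE_I2)
      fix \<omega>
      obtain L0 :: nat where "- X \<omega> \<le> real L0" using real_arch_simple by blast
      then have "\<forall>L\<ge>L0. R L \<omega> = 0" unfolding R_def by auto
      then show "(\<lambda>i. R i \<omega>) \<longlonglongrightarrow> 0"
        by (intro tendsto_eventually) (auto simp: eventually_sequentially)
    qed
    show "AE x in M. norm (R i x) \<le> Xm x" for i
      by (rule AE_I2) (auto simp: R_def Xm_def)
  qed (auto simp: Xm_int)
  have "\<delta> * \<epsilon> / 2 > 0" using \<delta>pos eps by simp
  from order_tendstoD(2)[OF Rlim[simplified] this]
  obtain L where L: "(LINT \<omega>|M. R L \<omega>) < \<delta> * \<epsilon> / 2" by (auto simp: eventually_sequentially)
  define Yf where "Yf x = max (- real L) (min (fst x) (real K))" for x :: "real \<times> (real ^ 'm)"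
  have Yf_meas[measurable]: "Yf \<in> borel_measurable borel" unfolding Yf_def
    by (intro borel_measurable_continuous_onI continuous_intros)
  define Rf where "Rf x = max 0 (- real L - fst x)" for x :: "real \<times> (real ^ 'm)"
  have Rf_meas[measurable]: "Rf \<in> borel_measurable borel" unfolding Rf_def
    by (intro borel_measurable_continuous_onI continuous_intros)
  define \<mu>Y where "\<mu>Y = (LINT \<omega>|M. Yf (Z 0 \<omega>))"
  have intY: "integrable M (\<lambda>\<omega>. Yf (Z k \<omega>))" for k
    by (rule integrable_const_bound[where B="real K + real L"]) (auto simp: Yf_def)
  have \<mu>Y: "\<mu>Y \<ge> 2 * \<delta>"
  proof -
    have "integrable M (\<lambda>\<omega>. min (max 0 (X \<omega>)) (real K) - Xm \<omega>)"
      by (intro Bochner_Integration.integrable_diff intP Xm_int)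
    moreover have "(\<lambda>\<omega>. min (max 0 (X \<omega>)) (real K) - Xm \<omega>) = (\<lambda>\<omega>. min (X \<omega>) (real K))"
      by (auto simp: Xm_def fun_eq_iff)
    ultimately have intmin: "integrable M (\<lambda>\<omega>. min (X \<omega>) (real K))" by simp
    have "mK \<le> \<mu>Y" unfolding mK_def \<mu>Y_def
      by (rule integral_mono[OF intmin intY]) (auto simp: Yf_def X_def)
    then show ?thesis by (simp add: \<delta>_def)
  qed
  define B where "B = real K + real L"
  have Bpos: "B > 0" using Kpos by (simp add: B_def)
  obtain n :: nat where n: "B^2 * ln (2 / \<epsilon>) / (2 * \<delta>^2) < real n" "n \<ge> 1"
  proof -
    obtain n0 :: nat where "B^2 * ln (2 / \<epsilon>) / (2 * \<delta>^2) < real n0" using reals_Archimedean2 by blast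
    then show thesis by (intro that[of "max n0 1"]) auto
  qed
  have npos: "real n > 0" using n by simp
  have expb: "exp (- 2 * (real n * \<delta>)^2 / (real n * (real K - - real L)^2)) < \<epsilon> / 2"
  proof -
    have eqB: "real K - - real L = B" by (simp add: B_def)
    have "- 2 * (real n * \<delta>)^2 / (real n * (real K - - real L)^2) = - (2 * \<delta>^2 / B^2) * real n"
      unfolding eqB using npos Bpos by (simp add: power2_eq_square field_simps)
    also have "\<dots> < - (2 * \<delta>^2 / B^2) * (B^2 * ln (2 / \<epsilon>) / (2 * \<delta>^2))"
      using n(1) \<delta>pos Bpos by (intro mult_strict_left_mono_neg) auto
    also have "\<dots> = - ln (2 / \<epsilon>)" using \<delta>pos Bpos by (simp add: field_simps)
    also have "\<dots> = ln (\<epsilon> / 2)" using eps by (simp add: ln_div)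
    finally show ?thesis using eps by (metis exp_less_cancel_iff exp_ln half_gt_zero)
  qed
  interpret H: Hoeffding_ineq_iid M "{..<n}" "\<lambda>k \<omega>. Yf (Z k \<omega>)" "\<lambda>\<omega>. Yf (Z 0 \<omega>)" "- real L" "real K" \<mu>Y
  proof unfold_locales
    show "\<mu>Y \<equiv> (LINT \<omega>|M. Yf (Z 0 \<omega>))" unfolding \<mu>Y_def by (rule reflexive)
    show "indep_vars (\<lambda>_. borel) (\<lambda>k \<omega>. Yf (Z k \<omega>)) {..<n}"
      by (rule indep_vars_compose2[OF indep_vars_subset[OF ind], where Y="\<lambda>_. Yf"]) auto
    show "distr M borel (\<lambda>\<omega>. Yf (Z i \<omega>)) = distr M borel (\<lambda>\<omega>. Yf (Z 0 \<omega>))" for i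
      by (rule distr_idd[OF Yf_meas])
    show "AE x in M. Yf (Z 0 x) \<in> {- real L..real K}"
      using Kpos by (intro AE_I2) (auto simp: Yf_def)
  qed auto
  have hoef: "prob {\<omega>\<in>space M. (\<Sum>k\<in>{..<n}. Yf (Z k \<omega>)) \<le> real n * \<mu>Y - real n * \<delta>} < \<epsilon> / 2"
  proof -
    have "prob {\<omega>\<in>space M. (\<Sum>k\<in>{..<n}. Yf (Z k \<omega>)) \<le> real (card {..<n}) * \<mu>Y - real n * \<delta>}
        \<le> exp (- 2 * (real n * \<delta>)^2 / (real (card {..<n}) * (real K - - real L)^2))"
      using \<delta>pos npos Kpos n(2)
      by (intro H.Hoeffding_ineq_le) (auto simp: lessThan_empty_iff)
    then show ?thesis using expb by simp
  qed
  have intR: "integrable M (\<lambda>\<omega>. Rf (Z k \<omega>))" for k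
  proof -
    have "(LINT \<omega>|M. Rf (Z 0 \<omega>)) = (LINT \<omega>|M. R L \<omega>)"
      by (simp add: Rf_def R_def X_def)
    have "integrable M (\<lambda>\<omega>. Rf (Z 0 \<omega>))"
      by (rule Bochner_Integration.integrable_bound[OF Xm_int]) (auto simp: Rf_def Xm_def X_def)
    then have "integrable (distr M borel (Z 0)) Rf" by (subst integrable_distr_eq) auto
    then have "integrable (distr M borel (Z k)) Rf" by (simp only: idd[of k])
    then show ?thesis by (subst (asm) integrable_distr_eq) auto
  qed
  have markov: "prob {\<omega>\<in>space M. real n * \<delta> \<le> (\<Sum>k<n. Rf (Z k \<omega>))} < \<epsilon> / 2"
  proof -
    have "prob {\<omega>\<in>space M. real n * \<delta> \<le> (\<Sum>k<n. Rf (Z k \<omega>))} \<le> (LINT \<omega>|M. (\<Sum>k<n. Rf (Z k \<omega>))) / (real n * \<delta>)"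
      by (rule integral_Markov_inequality_measure[where A="space M"])
         (use intR npos \<delta>pos in \<open>auto intro!: Bochner_Integration.integrable_sum sum_nonneg simp: Rf_def\<close>)
    also have "(LINT \<omega>|M. (\<Sum>k<n. Rf (Z k \<omega>))) = (\<Sum>k<n. LINT \<omega>|M. Rf (Z k \<omega>))"
      by (rule Bochner_Integration.integral_sum) (rule intR)
    also have "\<dots> = (\<Sum>k<n. LINT \<omega>|M. R L \<omega>)"
    proof (intro sum.cong refl)
      fix k
      show "(LINT \<omega>|M. Rf (Z k \<omega>)) = (LINT \<omega>|M. R L \<omega>)"
        using int_idd[OF Rf_meas, of k] by (simp add: Rf_def R_def X_def)
    qed
    also have "\<dots> / (real n * \<delta>) = (LINT \<omega>|M. R L \<omega>) / \<delta>" using npos by simp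
    also have "\<dots> < \<epsilon> / 2" using L \<delta>pos by (simp add: field_simps)
    finally show ?thesis .
  qed
  have incl: "{\<omega>\<in>space M. fst (walk Z n \<omega>) \<le> 0} \<subseteq>
      {\<omega>\<in>space M. (\<Sum>k\<in>{..<n}. Yf (Z k \<omega>)) \<le> real n * \<mu>Y - real n * \<delta>} \<union>
      {\<omega>\<in>space M. real n * \<delta> \<le> (\<Sum>k<n. Rf (Z k \<omega>))}"
  proof safe
    fix \<omega> assume w: "\<omega> \<in> space M" "fst (walk Z n \<omega>) \<le> 0" "\<not> real n * \<delta> \<le> (\<Sum>k<n. Rf (Z k \<omega>))"
    have pw: "fst (Z k \<omega>) \<ge> Yf (Z k \<omega>) - Rf (Z k \<omega>)" for k
      unfolding Yf_def Rf_def by auto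
    have "(\<Sum>k<n. Yf (Z k \<omega>)) - (\<Sum>k<n. Rf (Z k \<omega>)) \<le> (\<Sum>k<n. fst (Z k \<omega>))"
      unfolding sum_subtractf[symmetric] by (rule sum_mono) (use pw in auto)
    also have "\<dots> \<le> 0" using w(2) by (simp add: fst_walk)
    finally have "(\<Sum>k<n. Yf (Z k \<omega>)) < real n * \<delta>" using w(3) by simp
    also have "real n * \<delta> \<le> real n * \<mu>Y - real n * \<delta>"
      using \<mu>Y npos by (simp add: algebra_simps)
    finally show "(\<Sum>k\<in>{..<n}. Yf (Z k \<omega>)) \<le> real n * \<mu>Y - real n * \<delta>" by simp
  qed
  have "prob {\<omega>\<in>space M. fst (walk Z n \<omega>) \<le> 0} \<le>
      prob ({\<omega>\<in>space M. (\<Sum>k\<in>{..<n}. Yf (Z k \<omega>)) \<le> real n * \<mu>Y - real n * \<delta>} \<union>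
      {\<omega>\<in>space M. real n * \<delta> \<le> (\<Sum>k<n. Rf (Z k \<omega>))})"
    by (rule finite_measure_mono[OF incl]) measurable
  also have "\<dots> \<le> prob {\<omega>\<in>space M. (\<Sum>k\<in>{..<n}. Yf (Z k \<omega>)) \<le> real n * \<mu>Y - real n * \<delta>} +
      prob {\<omega>\<in>space M. real n * \<delta> \<le> (\<Sum>k<n. Rf (Z k \<omega>))}"
    by (rule measure_Un_le) measurable
  also have "\<dots> < \<epsilon>" using hoef markov by simp
  finally show ?thesis by (intro exI[of _ n]) simp
qed


lemma fst_walk_meas[measurable]: "(\<lambda>\<omega>. fst (walk Z n \<omega>)) \<in> borel_measurable M"
  unfolding fst_walk by (intro borel_measurable_sum fstZ)

lemma walk_meas[measurable]: "walk Z n \<in> borel_measurable M"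
  unfolding walk_def by (intro borel_measurable_sum Zm)

lemma pred_fin[measurable]: "Measurable.pred M (ladder_finite Z)"
  unfolding ladder_finite_def by measurable

lemma T_meas[measurable]: "ladder_time Z \<in> M \<rightarrow>\<^sub>M count_space UNIV"
  unfolding ladder_time_def by measurable

lemma not_fin_null:
  assumes hyp: "(\<integral>\<^sup>+ \<omega>. ennreal (max 0 (- fst (Z 0 \<omega>))) \<partial>M) < (\<integral>\<^sup>+ \<omega>. ennreal (max 0 (fst (Z 0 \<omega>))) \<partial>M)"
  shows "prob {\<omega>\<in>space M. \<not> ladder_finite Z \<omega>} = 0"
proof -
  have "prob {\<omega>\<in>space M. \<not> ladder_finite Z \<omega>} \<le> \<epsilon>" if eps: "\<epsilon> > 0" for \<epsilon>
  proof -
    obtain n where n: "prob {\<omega>\<in>space M. fst (walk Z n \<omega>) \<le> 0} \<le> \<epsilon>" using weak_law[OF hyp eps] by blast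
    have "prob {\<omega>\<in>space M. \<not> ladder_finite Z \<omega>} \<le> prob {\<omega>\<in>space M. fst (walk Z n \<omega>) \<le> 0}"
    proof (rule finite_measure_mono)
      show "{\<omega>\<in>space M. \<not> ladder_finite Z \<omega>} \<subseteq> {\<omega>\<in>space M. fst (walk Z n \<omega>) \<le> 0}"
        unfolding ladder_finite_def by (auto simp: not_less)
      show "{\<omega>\<in>space M. fst (walk Z n \<omega>) \<le> 0} \<in> sets M" by measurable
    qed
    then show ?thesis using n by simp
  qed
  then have "prob {\<omega>\<in>space M. \<not> ladder_finite Z \<omega>} \<le> 0"
    by (rule field_le_epsilon) simp
  then show ?thesis using measure_nonneg[of M] by (meson antisym)
qed

lemma AE_fin:
  assumes "prob {\<omega>\<in>space M. \<not> ladder_finite Z \<omega>} = 0"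
  shows "AE \<omega> in M. ladder_finite Z \<omega>"
proof (rule AE_I[where N="{\<omega>\<in>space M. \<not> ladder_finite Z \<omega>}"])
  show "{\<omega>\<in>space M. \<not> ladder_finite Z \<omega>} \<in> sets M" by measurable
  then show "emeasure M {\<omega>\<in>space M. \<not> ladder_finite Z \<omega>} = 0"
    using assms by (simp add: emeasure_eq_measure)
qed auto

lemma Cc_T:
  assumes fin: "ladder_finite Z \<omega>"
  shows "Cc (ladder_time Z \<omega>) (\<lambda>k. Z k \<omega>)"
proof -
  let ?P = "\<lambda>n. 0 < fst (walk Z n \<omega>)"
  have ex: "\<exists>n. ?P n" using fin by (simp add: ladder_finite_def)
  have T: "ladder_time Z \<omega> = (LEAST n. ?P n)" using fin by (simp add: ladder_time_def)
  have "?P (LEAST n. ?P n)" by (rule LeastI_ex[OF ex])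
  moreover have "\<not> ?P i" if "i < (LEAST n. ?P n)" for i using not_less_Least[OF that] .
  ultimately show ?thesis unfolding Cc_def T walk_ps by (auto simp: not_less)
qed

lemma psi_meas:
  "(\<lambda>\<omega>. cis (th \<xi> (ladder_height Z \<omega>) + t * real (ladder_time Z \<omega>))) \<in> borel_measurable M"
proof -
  have g: "(\<lambda>\<omega>. cis (th \<xi> (walk Z n \<omega>) + t * real n)) \<in> borel_measurable M" for n
  proof -
    have "(\<lambda>z. cis (th \<xi> z + t * real n)) \<in> borel_measurable borel"
      by (intro borel_measurable_continuous_onI continuous_intros th_cont[THEN continuous_on_subset]) auto
    then show ?thesis by (rule measurable_compose[OF walk_meas])
  qed
  show ?thesis unfolding ladder_height_def
    by (rule measurable_compose_countable[OF g T_meas])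
qed

lemma psi_sums:
  assumes fin: "AE \<omega> in M. ladder_finite Z \<omega>"
  shows "(\<lambda>n. cc \<xi> n * cis t ^ n) sums (LINT \<omega>|M. cis (th \<xi> (ladder_height Z \<omega>) + t * real (ladder_time Z \<omega>)))"
proof -
  define s where "s N \<omega> = (\<Sum>n<N. Fc \<xi> n (\<lambda>k. Z k \<omega>) * cis t ^ n)" for N \<omega>
  have sm: "s N \<in> borel_measurable M" for N unfolding s_def by measurable
  have sb: "norm (s N \<omega>) \<le> 1" for N \<omega>
  proof -
    have "norm (s N \<omega>) \<le> (\<Sum>n<N. norm (Fc \<xi> n (\<lambda>k. Z k \<omega>) * cis t ^ n))"
      unfolding s_def by (rule norm_sum)
    also have "\<dots> = (\<Sum>n<N. norm (Fc \<xi> n (\<lambda>k. Z k \<omega>)))" by (simp add: norm_mult norm_power)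
    also have "\<dots> \<le> 1" by (rule Fc_sum_le)
    finally show ?thesis .
  qed
  have si: "(LINT \<omega>|M. s N \<omega>) = (\<Sum>n<N. cc \<xi> n * cis t ^ n)" for N
  proof -
    have "(LINT \<omega>|M. s N \<omega>) = (\<Sum>n<N. LINT \<omega>|M. Fc \<xi> n (\<lambda>k. Z k \<omega>) * cis t ^ n)"
      unfolding s_def
      by (rule Bochner_Integration.integral_sum)
         (auto intro!: integrable_bdd borel_measurable_times Fc_path simp: norm_mult norm_power norm_Fc)
    also have "\<dots> = (\<Sum>n<N. cc \<xi> n * cis t ^ n)"
      by (simp add: cc_def integral_mult_left_zero)
    finally show ?thesis .
  qed
  have lim: "AE \<omega> in M. (\<lambda>N. s N \<omega>) \<longlonglongrightarrow> cis (th \<xi> (ladder_height Z \<omega>) + t * real (ladder_time Z \<omega>))"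
    using fin
  proof (eventually_elim)
    case (elim \<omega>)
    let ?T = "ladder_time Z \<omega>"
    have C: "Cc ?T (\<lambda>k. Z k \<omega>)" by (rule Cc_T[OF elim])
    have "s N \<omega> = cis (th \<xi> (ladder_height Z \<omega>) + t * real ?T)" if N: "N > ?T" for N
    proof -
      have "s N \<omega> = (\<Sum>n<N. if n = ?T then Fc \<xi> ?T (\<lambda>k. Z k \<omega>) * cis t ^ ?T else 0)"
        unfolding s_def
      proof (intro sum.cong refl)
        fix n assume "n \<in> {..<N}"
        show "Fc \<xi> n (\<lambda>k. Z k \<omega>) * cis t ^ n = (if n = ?T then Fc \<xi> ?T (\<lambda>k. Z k \<omega>) * cis t ^ ?T else 0)"
        proof (cases "n = ?T")
          case True then show ?thesis by simp
        next
          case False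
          then have "\<not> Cc n (\<lambda>k. Z k \<omega>)" using Cc_unique[OF C, of n] by metis
          then show ?thesis using False by (simp add: Fc_def)
        qed
      qed
      also have "\<dots> = Fc \<xi> ?T (\<lambda>k. Z k \<omega>) * cis t ^ ?T" using N by simp
      also have "\<dots> = cis (th \<xi> (ladder_height Z \<omega>) + t * real ?T)"
      proof -
        have "Fc \<xi> ?T (\<lambda>k. Z k \<omega>) = cis (th \<xi> (ladder_height Z \<omega>))"
          using C by (simp add: Fc_def ladder_height_def walk_ps)
        moreover have "cis t ^ ?T = cis (t * real ?T)" by (simp add: Complex.DeMoivre mult.commute)
        ultimately show ?thesis by (simp add: cis_mult)
      qed
      finally show ?thesis .
    qed
    then show ?case
      by (intro tendsto_eventually) (auto simp: eventually_sequentially intro!: exI[of _ "Suc ?T"])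
  qed
  have "(\<lambda>N. LINT \<omega>|M. s N \<omega>) \<longlonglongrightarrow> (LINT \<omega>|M. cis (th \<xi> (ladder_height Z \<omega>) + t * real (ladder_time Z \<omega>)))"
    by (rule integral_dominated_convergence[OF psi_meas sm _ lim, where w="\<lambda>_. 1"]) (auto intro!: AE_I2 sb)
  then show ?thesis unfolding sums_def si .
qed

lemma psi_bound:
  assumes fin: "AE \<omega> in M. ladder_finite Z \<omega>"
  shows "1 - norm (phi \<xi>) \<le> 2 * norm (1 - (LINT \<omega>|M. cis (th \<xi> (ladder_height Z \<omega>) + t * real (ladder_time Z \<omega>))))"
  using key_bound[of \<xi> t] psi_sums[OF fin, of \<xi> t] by (simp add: sums_iff)

lemma P_pos:
  assumes hyp: "(\<integral>\<^sup>+ \<omega>. ennreal (max 0 (- fst (Z 0 \<omega>))) \<partial>M) < (\<integral>\<^sup>+ \<omega>. ennreal (max 0 (fst (Z 0 \<omega>))) \<partial>M)"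
  shows "prob {\<omega>\<in>space M. fst (Z 0 \<omega>) > 0} > 0"
proof (rule ccontr)
  assume "\<not> ?thesis"
  then have z: "prob {\<omega>\<in>space M. fst (Z 0 \<omega>) > 0} = 0" using measure_nonneg[of M] by (meson antisym not_less)
  have "AE \<omega> in M. \<not> fst (Z 0 \<omega>) > 0"
  proof (rule AE_I[where N="{\<omega>\<in>space M. fst (Z 0 \<omega>) > 0}"])
    show "{\<omega>\<in>space M. fst (Z 0 \<omega>) > 0} \<in> sets M" by measurable
    then show "emeasure M {\<omega>\<in>space M. fst (Z 0 \<omega>) > 0} = 0" using z by (simp add: emeasure_eq_measure)
  qed auto
  then have "(\<integral>\<^sup>+ \<omega>. ennreal (max 0 (fst (Z 0 \<omega>))) \<partial>M) = (\<integral>\<^sup>+ \<omega>. 0 \<partial>M)"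
    by (intro nn_integral_cong_AE) (auto elim!: eventually_mono simp: not_less ennreal_neg)
  then show False using hyp by simp
qed

lemma T_one: "fst (Z 0 \<omega>) > 0 \<Longrightarrow> ladder_finite Z \<omega> \<and> ladder_time Z \<omega> = 1"
proof -
  assume p: "fst (Z 0 \<omega>) > 0"
  have w1: "fst (walk Z 1 \<omega>) > 0" using p by (simp add: walk_def)
  then have fin: "ladder_finite Z \<omega>" by (auto simp: ladder_finite_def)
  have "(LEAST n. 0 < fst (walk Z n \<omega>)) = 1"
  proof (rule Least_equality)
    show "0 < fst (walk Z 1 \<omega>)" by (rule w1)
  next
    fix y assume "0 < fst (walk Z y \<omega>)"
    then show "1 \<le> y" by (cases y) (auto simp: walk_def)
  qed
  then show ?thesis using fin by (simp add: ladder_time_def)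
qed

end

lemma subgroup_one: "int_subgroup B \<Longrightarrow> 1 \<in> B \<Longrightarrow> B = UNIV"
proof -
  assume B: "int_subgroup B" "1 \<in> B"
  have nat: "int n \<in> B" for n
    by (induction n) (use B in \<open>auto simp: int_subgroup_def\<close>)
  show "B = UNIV"
  proof (intro set_eqI iffI)
    fix z :: int
    show "z \<in> B"
    proof (cases "z \<ge> 0")
      case True then show ?thesis using nat[of "nat z"] by simp
    next
      case False
      then have "- z = int (nat (- z))" by simp
      then have "- z \<in> B" using nat by metis
      then show ?thesis using B(1) unfolding int_subgroup_def by force
    qed
  qed auto
qed


theorem lemma4p4:
  fixes M :: "'a measure" and Z :: "nat \<Rightarrow> 'a \<Rightarrow> real \<times> (real ^ 'm)"
  assumes "prob_space M"
    and "prob_space.indep_vars M (\<lambda>_. borel) Z UNIV"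
    and "\<And>n. distr M borel (Z n) = distr M borel (Z 0)"
    and "(\<integral>\<^sup>+ \<omega>. ennreal (max 0 (- fst (Z 0 \<omega>))) \<partial>M) < (\<integral>\<^sup>+ \<omega>. ennreal (max 0 (fst (Z 0 \<omega>))) \<partial>M)"
    and "cramer_condition M (Z 0)"
  shows "arithmetic_on_Z M (ladder_finite Z) (ladder_time Z)
    \<and> strongly_nonlattice_with M (ladder_height Z) (ladder_time Z)"
proof -
  interpret rw M Z
    using assms(1-3) by (simp add: rw_def rw_axioms_def)
  have null: "prob {\<omega>\<in>space M. \<not> ladder_finite Z \<omega>} = 0" by (rule not_fin_null[OF assms(4)])
  have fin: "AE \<omega> in M. ladder_finite Z \<omega>" by (rule AE_fin[OF null])
  have arith: "arithmetic_on_Z M (ladder_finite Z) (ladder_time Z)"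
    unfolding arithmetic_on_Z_def
  proof (intro conjI allI impI)
    have "prob {\<omega>\<in>space M. ladder_finite Z \<omega>} = 1 - prob {\<omega>\<in>space M. \<not> ladder_finite Z \<omega>}"
    proof -
      have "{\<omega>\<in>space M. ladder_finite Z \<omega>} = space M - {\<omega>\<in>space M. \<not> ladder_finite Z \<omega>}" by auto
      moreover have "{\<omega>\<in>space M. \<not> ladder_finite Z \<omega>} \<in> sets M" by measurable
      ultimately show ?thesis by (simp add: prob_compl)
    qed
    then show "prob {\<omega>\<in>space M. ladder_finite Z \<omega>} = 1" using null by simp
  next
    fix B assume B: "int_subgroup B \<and> B \<noteq> UNIV"
    then have n1: "1 \<notin> B" using subgroup_one by blast
    let ?P = "{\<omega>\<in>space M. fst (Z 0 \<omega>) > 0}"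
    have Pm: "?P \<in> sets M" by measurable
    have "prob {\<omega>\<in>space M. ladder_finite Z \<omega> \<and> int (ladder_time Z \<omega>) \<in> B} \<le> prob (space M - ?P)"
    proof (rule finite_measure_mono)
      show "{\<omega>\<in>space M. ladder_finite Z \<omega> \<and> int (ladder_time Z \<omega>) \<in> B} \<subseteq> space M - ?P"
        using T_one n1 by fastforce
      show "space M - ?P \<in> sets M" using Pm by auto
    qed
    also have "\<dots> = 1 - prob ?P" using Pm by (simp add: prob_compl)
    also have "\<dots> < 1" using P_pos[OF assms(4)] by simp
    finally show "prob {\<omega>\<in>space M. ladder_finite Z \<omega> \<and> int (ladder_time Z \<omega>) \<in> B} < 1" .
  qed
  have cr: "Limsup at_infinity (\<lambda>\<xi>. ereal (norm (phi \<xi>))) < 1"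
    using assms(5) unfolding cramer_condition_def phi_def th_def .
  obtain y :: ereal where y: "Limsup at_infinity (\<lambda>\<xi>. ereal (norm (phi \<xi>))) < y" "y < 1"
    using dense[OF cr] by blast
  define \<kappa> where "\<kappa> = (if y = -\<infinity> then 0 else real_of_ereal y)"
  have \<kappa>1: "\<kappa> < 1"
  proof (cases "y = -\<infinity>")
    case True then show ?thesis by (simp add: \<kappa>_def)
  next
    case False
    then obtain r where "y = ereal r" using y(2) by (cases y) auto
    then show ?thesis using y(2) by (simp add: \<kappa>_def)
  qed
  have ev: "eventually (\<lambda>\<xi>. norm (phi \<xi>) < \<kappa>) at_infinity"
    using Limsup_lessD[OF y(1)]
  proof (rule eventually_mono)
    fix \<xi> assume a: "ereal (norm (phi \<xi>)) < y"
    show "norm (phi \<xi>) < \<kappa>"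
    proof (cases y)
      case (real r) then show ?thesis using a by (simp add: \<kappa>_def)
    qed (use a y(2) in auto)
  qed
  have "ereal ((1 - \<kappa>) / 2) \<le> Liminf at_infinity (\<lambda>\<xi>.
        INF t \<in> {-pi<..<pi}. ereal (cmod (1 - (LINT \<omega>|M.
           cis (fst \<xi> * fst (ladder_height Z \<omega>) + snd \<xi> \<bullet> snd (ladder_height Z \<omega>) + t * real (ladder_time Z \<omega>))))))"
  proof (rule Liminf_bounded)
    show "\<forall>\<^sub>F \<xi> in at_infinity. ereal ((1 - \<kappa>) / 2) \<le> (INF t \<in> {-pi<..<pi}. ereal (cmod (1 - (LINT \<omega>|M.
           cis (fst \<xi> * fst (ladder_height Z \<omega>) + snd \<xi> \<bullet> snd (ladder_height Z \<omega>) + t * real (ladder_time Z \<omega>))))))"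
      using ev
    proof (rule eventually_mono)
      fix \<xi> assume k: "norm (phi \<xi>) < \<kappa>"
      show "ereal ((1 - \<kappa>) / 2) \<le> (INF t \<in> {-pi<..<pi}. ereal (cmod (1 - (LINT \<omega>|M.
           cis (fst \<xi> * fst (ladder_height Z \<omega>) + snd \<xi> \<bullet> snd (ladder_height Z \<omega>) + t * real (ladder_time Z \<omega>))))))"
      proof (rule INF_greatest)
        fix t assume "t \<in> {-pi<..<pi}"
        have "1 - norm (phi \<xi>) \<le> 2 * norm (1 - (LINT \<omega>|M. cis (th \<xi> (ladder_height Z \<omega>) + t * real (ladder_time Z \<omega>))))"
          by (rule psi_bound[OF fin])
        then have "(1 - \<kappa>) / 2 \<le> cmod (1 - (LINT \<omega>|M.
           cis (fst \<xi> * fst (ladder_height Z \<omega>) + snd \<xi> \<bullet> snd (ladder_height Z \<omega>) + t * real (ladder_time Z \<omega>))))"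
          using k by (simp add: th_def)
        then show "ereal ((1 - \<kappa>) / 2) \<le> ereal (cmod (1 - (LINT \<omega>|M.
           cis (fst \<xi> * fst (ladder_height Z \<omega>) + snd \<xi> \<bullet> snd (ladder_height Z \<omega>) + t * real (ladder_time Z \<omega>)))))"
          by simp
      qed
    qed
  qed
  moreover have "(0::ereal) < ereal ((1 - \<kappa>) / 2)" using \<kappa>1 by simp
  ultimately have "strongly_nonlattice_with M (ladder_height Z) (ladder_time Z)"
    unfolding strongly_nonlattice_with_def by (meson less_le_trans)
  with arith show ?thesis by blast
qed

end
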